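(* Let $T$ be a primed tableau of shape $\lambda/\mu$ over $X'_k$, $1\le i\le k-1$, $j=i+1$, with $e_i(T)\ne 0$, and let $y,p$ be the boxes chosen in the definition of $e_i$. Then either $p=y$ and $e_i(T)$ is obtained from $T$ by replacing the entry $j$ in $y$ by $i$, or $p\ne y$ and $e_i(T)$ is obtained by replacing the $j$ in $y$ by $j'$ and a $j'$ in $p$ by $i$. Moreover, $e_i(T)$ is again a primed tableau of shape $\lambda/\mu$.
   Context: Primed tableaux: Fix $k$. $X'_k=\{1'<1<2'<2<\dots<k'<k\}$; moving one step along this chain is "changing by a half unit" (e.g. $j\to j'\to i$ are decreases by a half unit when $j=i+1$). A primed tableau of (skew) shape $\lambda/\mu$ is a filling of the diagram (English convention) with letters of $X'_k$, rows and columns weakly increasing, at most one $i'$ per row and at most one $i$ per column, for every $i$. For a position $p$, $c(p)$ is its entry; a position that is not a box of $T$ is regarded as having content smaller than every letter when it lies to the left of or above the relevant box. The reading word of $T$ is the word of its unprimed entries, read row by row left to right, from the bottom row to the top row. Bracketing: fix $i$, $j=i+1$. In the subword of the reading word consisting of the letters $i$ and $j$, repeatedly pair (bracket) a letter $j$ with a letter $i$ occurring later such that no unbracketed letters lie between them, until the unbracketed letters form a word $i^aj^b$. Operator $e_i$: if there is no unbracketed $j$, $e_i(T)=0$. Otherwise let $y$ be the box corresponding to the leftmost unbracketed $j$; $W_y$ the position immediately left of $y$, $N_y$ the position immediately above $y$. Choose a box $p$: (1) if $c(W_y)\le i$ and $c(N_y)<i$, $p=y$; (2) if $c(W_y)=j'$,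 $p=W_y$; (3) if $c(W_y)\le i$ and $c(N_y)\in\{i,j'\}$, take the maximal ribbon starting at $N_y$ and extending by steps North and/or East consisting only of boxes with entries $i$ or $j'$, and let $p$ be its Northeast-most box. Then $e_i(T)$ is obtained from $T$ by decreasing $c(y)$ by a half unit and then decreasing $c(p)$ by a half unit. *)

theory Defs
  imports Main
begin

(* Letters of X'_k are encoded as positive naturals:
     i' |-> 2*i - 1,   i |-> 2*i.
   So 1' < 1 < 2' < 2 < ... < k' < k becomes 1 < 2 < ... < 2k, and a
   "half unit" step is a step of 1.  The value 0 is used for positions
   that are not boxes ("smaller than every letter"). *)

definition prm :: "nat \<Rightarrow> nat" where "prm i = 2 * i - 1"
definition unp :: "nat \<Rightarrow> nat" where "unp i = 2 * i"

(* partitions as weakly decreasing lists of row lengths; rows and columns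
   are indexed from 0, English convention: (r,c) = row r, column c *)
definition rowlen :: "nat list \<Rightarrow> nat \<Rightarrow> nat" where
  "rowlen xs r = (if r < length xs then xs ! r else 0)"

definition is_partition :: "nat list \<Rightarrow> bool" where
  "is_partition xs = (\<forall>r. Suc r < length xs \<longrightarrow> xs ! Suc r \<le> xs ! r)"

definition skew_shape :: "nat list \<Rightarrow> nat list \<Rightarrow> bool" where
  "skew_shape lam mu = (is_partition lam \<and> is_partition mu \<and> (\<forall>r. rowlen mu r \<le> rowlen lam r))"

definition boxes :: "nat list \<Rightarrow> nat list \<Rightarrow> (nat \<times> nat) set" where
  "boxes lam mu = {(r, c). rowlen mu r \<le> c \<and> c < rowlen lam r}"

definition primed_tableau :: "nat \<Rightarrow> nat list \<Rightarrow> nat list \<Rightarrow> (nat \<times> nat \<Rightarrow> nat) \<Rightarrow> bool" where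
  "primed_tableau k lam mu T =
     (skew_shape lam mu \<and>
      (\<forall>p. p \<notin> boxes lam mu \<longrightarrow> T p = 0) \<and>
      (\<forall>p \<in> boxes lam mu. 1 \<le> T p \<and> T p \<le> 2 * k) \<and>
      (\<forall>r c. (r, c) \<in> boxes lam mu \<and> (r, Suc c) \<in> boxes lam mu \<longrightarrow> T (r, c) \<le> T (r, Suc c)) \<and>
      (\<forall>r c. (r, c) \<in> boxes lam mu \<and> (Suc r, c) \<in> boxes lam mu \<longrightarrow> T (r, c) \<le> T (Suc r, c)) \<and>
      (\<forall>r c c'. (r, c) \<in> boxes lam mu \<and> (r, c') \<in> boxes lam mu \<and> T (r, c) = T (r, c')
                \<and> odd (T (r, c)) \<longrightarrow> c = c') \<and>
      (\<forall>r r' c. (r, c) \<in> boxes lam mu \<and> (r', c) \<in> boxes lam mu \<and> T (r, c) = T (r', c)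
                \<and> even (T (r, c)) \<longrightarrow> r = r'))"

(* contents of W_y and N_y (0 = not a box, smaller than every letter) *)
definition cW :: "(nat \<times> nat \<Rightarrow> nat) \<Rightarrow> nat \<times> nat \<Rightarrow> nat" where
  "cW T p = (case p of (r, c) \<Rightarrow> if c = 0 then 0 else T (r, c - 1))"
definition cN :: "(nat \<times> nat \<Rightarrow> nat) \<Rightarrow> nat \<times> nat \<Rightarrow> nat" where
  "cN T p = (case p of (r, c) \<Rightarrow> if r = 0 then 0 else T (r - 1, c))"

(* reading word, as the list of boxes carrying unprimed entries, read row by row
   left to right, from the bottom row to the top row *)
definition reading_boxes :: "nat list \<Rightarrow> nat list \<Rightarrow> (nat \<times> nat \<Rightarrow> nat) \<Rightarrow> (nat \<times> nat) list" where
  "reading_boxes lam mu T =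
     concat (map (\<lambda>r. filter (\<lambda>p. even (T p)) (map (\<lambda>c. (r, c)) [rowlen mu r..<rowlen lam r]))
                 (rev [0..<length lam]))"

(* Bracketing: scan the i/j-subword left to right; a letter j (flag True) is pushed,
   a letter i (flag False) is bracketed with the most recent unbracketed j, if any.
   The result is the list of unbracketed j's (most recent first). *)
fun unbracketed :: "('p \<times> bool) list \<Rightarrow> 'p list \<Rightarrow> 'p list" where
  "unbracketed [] st = st"
| "unbracketed ((p, True) # xs) st = unbracketed xs (p # st)"
| "unbracketed ((p, False) # xs) [] = unbracketed xs []"
| "unbracketed ((p, False) # xs) (q # st) = unbracketed xs st"

definition ij_subword :: "nat list \<Rightarrow> nat list \<Rightarrow> nat \<Rightarrow> (nat \<times> nat \<Rightarrow> nat) \<Rightarrow> ((nat \<times> nat) \<times> bool) list" where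
  "ij_subword lam mu i T =
     map (\<lambda>p. (p, T p = unp (Suc i)))
       (filter (\<lambda>p. T p = unp i \<or> T p = unp (Suc i)) (reading_boxes lam mu T))"

(* the box y of the leftmost unbracketed j, if any *)
definition e_box :: "nat list \<Rightarrow> nat list \<Rightarrow> nat \<Rightarrow> (nat \<times> nat \<Rightarrow> nat) \<Rightarrow> (nat \<times> nat) option" where
  "e_box lam mu i T =
     (let u = unbracketed (ij_subword lam mu i T) [] in if u = [] then None else Some (last u))"

inductive rib_reach :: "(nat \<times> nat \<Rightarrow> nat) \<Rightarrow> nat \<Rightarrow> nat \<times> nat \<Rightarrow> nat \<times> nat \<Rightarrow> bool"
  for T i s where
  start: "rib_reach T i s s"
| north: "rib_reach T i s (Suc r, c) \<Longrightarrow> T (r, c) \<in> {unp i, prm (Suc i)} \<Longrightarrow> rib_reach T i s (r, c)"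
| east: "rib_reach T i s (r, c) \<Longrightarrow> T (r, Suc c) \<in> {unp i, prm (Suc i)} \<Longrightarrow> rib_reach T i s (r, Suc c)"

definition rib_end :: "(nat \<times> nat \<Rightarrow> nat) \<Rightarrow> nat \<Rightarrow> nat \<times> nat \<Rightarrow> nat \<times> nat" where
  "rib_end T i s = (THE q. rib_reach T i s q \<and>
      (case q of (r, c) \<Rightarrow> \<not> (0 < r \<and> T (r - 1, c) \<in> {unp i, prm (Suc i)})
                         \<and> T (r, Suc c) \<notin> {unp i, prm (Suc i)}))"

definition p_box :: "(nat \<times> nat \<Rightarrow> nat) \<Rightarrow> nat \<Rightarrow> nat \<times> nat \<Rightarrow> nat \<times> nat" where
  "p_box T i y = (case y of (r, c) \<Rightarrow>
      if cW T y \<le> unp i \<and> cN T y < unp i then y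
      else if cW T y = prm (Suc i) then (r, c - 1)
      else if cW T y \<le> unp i \<and> cN T y \<in> {unp i, prm (Suc i)} then rib_end T i (r - 1, c)
      else y)"

(* e_i; None represents 0 *)
definition e_op :: "nat list \<Rightarrow> nat list \<Rightarrow> nat \<Rightarrow> (nat \<times> nat \<Rightarrow> nat) \<Rightarrow> (nat \<times> nat \<Rightarrow> nat) option" where
  "e_op lam mu i T = (case e_box lam mu i T of
      None \<Rightarrow> None
    | Some y \<Rightarrow> (let p = p_box T i y; T1 = T(y := T y - 1) in Some (T1(p := T1 p - 1))))"

end

theory Submission
  imports Defs
begin


lemma rowlen_mono:
  assumes "is_partition xs" "r1 \<le> r2" shows "rowlen xs r2 \<le> rowlen xs r1"
  using assms(2)
proof (induction r2 rule: dec_induct)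
  case base then show ?case by simp
next
  case (step n)
  have "rowlen xs (Suc n) \<le> rowlen xs n"
    using assms(1) unfolding rowlen_def is_partition_def by auto
  then show ?case using step by simp
qed

lemma in_boxes: "(a,x) \<in> boxes lam mu \<longleftrightarrow> rowlen mu a \<le> x \<and> x < rowlen lam a"
  by (simp add: boxes_def)

context
  fixes k lam mu T assumes tab: "primed_tableau k lam mu T"
begin

lemma tab_all:
  "skew_shape lam mu \<and>
      (\<forall>p. p \<notin> boxes lam mu \<longrightarrow> T p = 0) \<and>
      (\<forall>p \<in> boxes lam mu. 1 \<le> T p \<and> T p \<le> 2 * k) \<and>
      (\<forall>r c. (r, c) \<in> boxes lam mu \<and> (r, Suc c) \<in> boxes lam mu \<longrightarrow> T (r, c) \<le> T (r, Suc c)) \<and>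
      (\<forall>r c. (r, c) \<in> boxes lam mu \<and> (Suc r, c) \<in> boxes lam mu \<longrightarrow> T (r, c) \<le> T (Suc r, c)) \<and>
      (\<forall>r c c'. (r, c) \<in> boxes lam mu \<and> (r, c') \<in> boxes lam mu \<and> T (r, c) = T (r, c')
                \<and> odd (T (r, c)) \<longrightarrow> c = c') \<and>
      (\<forall>r r' c. (r, c) \<in> boxes lam mu \<and> (r', c) \<in> boxes lam mu \<and> T (r, c) = T (r', c)
                \<and> even (T (r, c)) \<longrightarrow> r = r')"
  using tab unfolding primed_tableau_def .

lemma tab_skew: "skew_shape lam mu" using tab_all by (rule conjunct1)

lemma tab_off: "p \<notin> boxes lam mu \<Longrightarrow> T p = 0"
  by (rule tab_all[THEN conjunct2, THEN conjunct1, rule_format])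

lemma tab_nz: "T p \<noteq> 0 \<Longrightarrow> p \<in> boxes lam mu"
proof (rule ccontr)
  assume "T p \<noteq> 0" "p \<notin> boxes lam mu"
  then show False using tab_off[of p] by simp
qed

lemma tab_range: "p \<in> boxes lam mu \<Longrightarrow> 1 \<le> T p \<and> T p \<le> 2 * k"
  by (rule tab_all[THEN conjunct2, THEN conjunct2, THEN conjunct1, rule_format])

lemma tab_row_step: "(r,c) \<in> boxes lam mu \<Longrightarrow> (r, Suc c) \<in> boxes lam mu \<Longrightarrow> T (r,c) \<le> T (r, Suc c)"
  by (rule tab_all[THEN conjunct2, THEN conjunct2, THEN conjunct2, THEN conjunct1, rule_format], intro conjI)
lemma tab_col_step: "(r,c) \<in> boxes lam mu \<Longrightarrow> (Suc r, c) \<in> boxes lam mu \<Longrightarrow> T (r,c) \<le> T (Suc r, c)"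
  by (rule tab_all[THEN conjunct2, THEN conjunct2, THEN conjunct2, THEN conjunct2, THEN conjunct1, rule_format], intro conjI)
lemma tab_row_odd: "(r,c) \<in> boxes lam mu \<Longrightarrow> (r,c') \<in> boxes lam mu \<Longrightarrow> T (r,c) = T (r,c') \<Longrightarrow> odd (T (r,c)) \<Longrightarrow> c = c'"
  by (rule tab_all[THEN conjunct2, THEN conjunct2, THEN conjunct2, THEN conjunct2, THEN conjunct2, THEN conjunct1, rule_format], intro conjI)
lemma tab_col_even: "(r,c) \<in> boxes lam mu \<Longrightarrow> (r',c) \<in> boxes lam mu \<Longrightarrow> T (r,c) = T (r',c) \<Longrightarrow> even (T (r,c)) \<Longrightarrow> r = r'"
  by (rule tab_all[THEN conjunct2, THEN conjunct2, THEN conjunct2, THEN conjunct2, THEN conjunct2, THEN conjunct2, rule_format], intro conjI)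

lemma tab_rect:
  assumes "(a1,x1) \<in> boxes lam mu" "(a2,x2) \<in> boxes lam mu" "a1 \<le> a" "a \<le> a2" "x1 \<le> x" "x \<le> x2"
  shows "(a,x) \<in> boxes lam mu"
proof -
  have sk: "is_partition lam" "is_partition mu" using tab_skew unfolding skew_shape_def by auto
  have "rowlen mu a \<le> rowlen mu a1" using rowlen_mono[OF sk(2) assms(3)] .
  moreover have "rowlen lam a2 \<le> rowlen lam a" using rowlen_mono[OF sk(1) assms(4)] .
  ultimately show ?thesis using assms(1,2,5,6) unfolding in_boxes by linarith
qed

lemma tab_row_mono_aux:
  "(a,x1) \<in> boxes lam mu \<Longrightarrow> (a,x1+d) \<in> boxes lam mu \<Longrightarrow> T (a,x1) \<le> T (a,x1+d)"
proof (induction d)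
  case 0 then show ?case by simp
next
  case (Suc d)
  have b: "(a,x1+d) \<in> boxes lam mu" using tab_rect[OF Suc.prems(1) Suc.prems(2)] by simp
  have "T (a,x1+d) \<le> T (a, Suc (x1+d))" using tab_row_step[OF b] Suc.prems(2) by simp
  then show ?case using Suc.IH[OF Suc.prems(1) b] by simp
qed

lemma tab_row_mono:
  assumes "(a,x1) \<in> boxes lam mu" "(a,x2) \<in> boxes lam mu" "x1 \<le> x2"
  shows "T (a,x1) \<le> T (a,x2)"
  using tab_row_mono_aux[OF assms(1), of "x2 - x1"] assms(2,3) by simp

lemma tab_col_mono_aux:
  "(a1,x) \<in> boxes lam mu \<Longrightarrow> (a1+d,x) \<in> boxes lam mu \<Longrightarrow> T (a1,x) \<le> T (a1+d,x)"
proof (induction d)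
  case 0 then show ?case by simp
next
  case (Suc d)
  have b: "(a1+d,x) \<in> boxes lam mu" using tab_rect[OF Suc.prems(1) Suc.prems(2)] by simp
  have "T (a1+d,x) \<le> T (Suc (a1+d), x)" using tab_col_step[OF b] Suc.prems(2) by simp
  then show ?case using Suc.IH[OF Suc.prems(1) b] by simp
qed

lemma tab_col_mono:
  assumes "(a1,x) \<in> boxes lam mu" "(a2,x) \<in> boxes lam mu" "a1 \<le> a2"
  shows "T (a1,x) \<le> T (a2,x)"
  using tab_col_mono_aux[OF assms(1), of "a2 - a1"] assms(2,3) by simp

lemma tab_mono2:
  assumes "(a1,x1) \<in> boxes lam mu" "(a2,x2) \<in> boxes lam mu" "a1 \<le> a2" "x1 \<le> x2"
  shows "T (a1,x1) \<le> T (a2,x2)"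
proof -
  have b: "(a1,x2) \<in> boxes lam mu" using tab_rect[OF assms(1,2)] assms by auto
  show ?thesis using tab_row_mono[OF assms(1) b assms(4)] tab_col_mono[OF b assms(2,3)] by simp
qed

lemma boxes_finite: "finite (boxes lam mu)"
proof -
  have "boxes lam mu \<subseteq> (SIGMA r:{..<length lam}. {..<lam ! r})"
  proof
    fix p assume "p \<in> boxes lam mu"
    then obtain r c where p: "p = (r,c)" "c < rowlen lam r" unfolding boxes_def by blast
    then have "r < length lam" unfolding rowlen_def by (cases "r < length lam") auto
    then show "p \<in> (SIGMA r:{..<length lam}. {..<lam ! r})" using p unfolding rowlen_def by simp
  qed
  moreover have "finite (SIGMA r:{..<length lam}. {..<lam ! r})" by (intro finite_SigmaI) auto
  ultimately show ?thesis by (rule finite_subset)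
qed

lemma lemL:
  assumes "T (Suc a, x) = 2*i+2" "(a, x) \<in> boxes lam mu" "(a, x - 1) \<in> boxes lam mu" "1 \<le> x"
  shows "T (a, x - 1) \<le> 2*i" and "T (a,x) \<le> 2*i+1"
proof -
  have "T (Suc a, x) \<noteq> 0" using assms(1) by simp
  then have bS: "(Suc a, x) \<in> boxes lam mu" by (rule tab_nz)
  have "T (a,x) \<le> 2*i+2" using tab_col_step[OF assms(2) bS] assms(1) by simp
  moreover have "T (a,x) \<noteq> 2*i+2" using tab_col_even[OF assms(2) bS] assms(1) by fastforce
  ultimately show ax: "T (a,x) \<le> 2*i+1" by simp
  have le: "T (a,x-1) \<le> T (a,x)" using tab_row_mono[OF assms(3,2)] by simp
  have "T (a,x-1) \<noteq> 2*i+1"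
  proof
    assume h: "T (a,x-1) = 2*i+1"
    then have "T (a,x) = 2*i+1" using le ax by simp
    then have e: "T (a,x-1) = T (a,x)" using h by simp
    have "odd (T (a,x-1))" using h by simp
    then have "x - 1 = x" using tab_row_odd[OF assms(3,2) e] by blast
    then show False using assms(4) by simp
  qed
  then show "T (a, x - 1) \<le> 2*i" using le ax by linarith
qed

end


definition bef :: "nat \<times> nat \<Rightarrow> nat \<times> nat \<Rightarrow> bool" where
  "bef p q = (fst q < fst p \<or> (fst p = fst q \<and> snd p < snd q))"

lemma bef_irrefl: "\<not> bef p p" by (simp add: bef_def)
lemma bef_trans: "bef p q \<Longrightarrow> bef q r \<Longrightarrow> bef p r" by (auto simp: bef_def)
lemma bef_asym: "bef p q \<Longrightarrow> \<not> bef q p" by (auto simp: bef_def)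
lemma bef_total: "p \<noteq> q \<Longrightarrow> bef p q \<or> bef q p"
  by (cases p; cases q) (auto simp: bef_def)

lemma ub_append: "unbracketed (xs @ ys) st = unbracketed ys (unbracketed xs st)"
  by (induction xs st rule: unbracketed.induct) auto

lemma ub_shape: "\<exists>zs m. unbracketed xs st = zs @ drop m st \<and> set zs \<subseteq> {p. (p,True) \<in> set xs}"
proof (induction xs st rule: unbracketed.induct)
  case (1 st)
  show ?case by (rule exI[of _ "[]"], rule exI[of _ 0]) simp
next
  case (2 p xs st)
  then obtain zs m where h: "unbracketed xs (p # st) = zs @ drop m (p # st)" "set zs \<subseteq> {q. (q,True) \<in> set xs}" by blast
  show ?case
  proof (cases m)
    case 0
    then show ?thesis using h by (intro exI[of _ "zs @ [p]"] exI[of _ 0]) auto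
  next
    case (Suc m')
    then show ?thesis using h by (intro exI[of _ zs] exI[of _ m']) auto
  qed
next
  case (3 p xs)
  then obtain zs m where h: "unbracketed xs [] = zs @ drop m []" "set zs \<subseteq> {q. (q,True) \<in> set xs}" by blast
  then show ?case by (intro exI[of _ zs] exI[of _ 0]) auto
next
  case (4 p xs q st)
  then obtain zs m where h: "unbracketed xs st = zs @ drop m st" "set zs \<subseteq> {q. (q,True) \<in> set xs}" by blast
  then show ?case by (intro exI[of _ zs] exI[of _ "Suc m"]) auto
qed

definition cntT :: "('a \<times> bool) list \<Rightarrow> nat" where "cntT xs = length (filter snd xs)"
definition cntF :: "('a \<times> bool) list \<Rightarrow> nat" where "cntF xs = length (filter (\<lambda>x. \<not> snd x) xs)"

lemma ub_pop:
  "cntT q + length ys < cntF q \<Longrightarrow>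
   \<exists>zs m. 1 \<le> m \<and> unbracketed (q @ rest) (ys @ st) = zs @ drop m st \<and> set zs \<subseteq> {p. (p,True) \<in> set (q @ rest)}"
proof (induction q arbitrary: ys)
  case Nil then show ?case by (simp add: cntF_def cntT_def)
next
  case (Cons x q)
  obtain p b where x: "x = (p,b)" by (cases x)
  have sub: "{p. (p,True) \<in> set (q @ rest)} \<subseteq> {p. (p,True) \<in> set ((x # q) @ rest)}" by auto
  show ?case
  proof (cases b)
    case True
    have "cntT q + length (p # ys) < cntF q" using Cons.prems x True by (simp add: cntF_def cntT_def)
    from Cons.IH[OF this] obtain zs m where h: "1 \<le> m" "unbracketed (q @ rest) ((p # ys) @ st) = zs @ drop m st"
      "set zs \<subseteq> {p. (p,True) \<in> set (q @ rest)}" by blast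
    have e: "unbracketed ((x # q) @ rest) (ys @ st) = unbracketed (q @ rest) ((p # ys) @ st)" using x True by simp
    show ?thesis
      apply (rule exI[of _ zs], rule exI[of _ m], rule conjI[OF h(1)], rule conjI[OF trans[OF e h(2)]])
      by (rule subset_trans[OF h(3) sub])
  next
    case False
    show ?thesis
    proof (cases ys)
      case Nil
      show ?thesis
      proof (cases st)
        case Nil
        from ub_shape[of "q @ rest" "[]"] obtain zs m where h: "unbracketed (q @ rest) [] = zs @ drop m []" "set zs \<subseteq> {p. (p,True) \<in> set (q @ rest)}"
          by blast
        have e: "unbracketed ((x # q) @ rest) (ys @ st) = unbracketed (q @ rest) []" using x False \<open>ys = []\<close> Nil by simp
        have e2: "zs @ drop m [] = zs @ drop 1 st" using Nil by simp
        show ?thesis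
          apply (rule exI[of _ zs], rule exI[of _ 1], rule conjI[OF order.refl], rule conjI[OF trans[OF e trans[OF h(1) e2]]])
          by (rule subset_trans[OF h(2) sub])
      next
        case (Cons s st')
        from ub_shape[of "q @ rest" st'] obtain zs m where h: "unbracketed (q @ rest) st' = zs @ drop m st'" "set zs \<subseteq> {p. (p,True) \<in> set (q @ rest)}"
          by blast
        have e: "unbracketed ((x # q) @ rest) (ys @ st) = unbracketed (q @ rest) st'" using x False \<open>ys = []\<close> Cons by simp
        have e2: "drop m st' = drop (Suc m) st" using Cons by simp
        show ?thesis
          apply (rule exI[of _ zs], rule exI[of _ "Suc m"], rule conjI, simp, rule conjI)
          using e h(1) e2 apply simp
          by (rule subset_trans[OF h(2) sub])
      qed
    next
      case (Cons y1 ys')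
      have "cntT q + length ys' < cntF q" using Cons.prems x False \<open>ys = y1 # ys'\<close> by (simp add: cntF_def cntT_def)
      from Cons.IH[OF this] obtain zs m where h: "1 \<le> m" "unbracketed (q @ rest) (ys' @ st) = zs @ drop m st"
        "set zs \<subseteq> {p. (p,True) \<in> set (q @ rest)}" by blast
      have e: "unbracketed ((x # q) @ rest) (ys @ st) = unbracketed (q @ rest) (ys' @ st)" using x False \<open>ys = y1 # ys'\<close> by simp
      show ?thesis
        apply (rule exI[of _ zs], rule exI[of _ m], rule conjI[OF h(1)], rule conjI[OF trans[OF e h(2)]])
      by (rule subset_trans[OF h(3) sub])
    qed
  qed
qed

lemma ub_mem: "y \<in> set (unbracketed xs []) \<Longrightarrow> (y, True) \<in> set xs"
proof -
  assume a: "y \<in> set (unbracketed xs [])"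
  from ub_shape[of xs "[]"] obtain zs m where "unbracketed xs [] = zs @ drop m []" "set zs \<subseteq> {p. (p,True) \<in> set xs}" by blast
  then show ?thesis using a by auto
qed

lemma sorted_bef_distinct: "sorted_wrt bef xs \<Longrightarrow> distinct xs"
  by (induction xs) (auto simp: bef_irrefl)

lemma takeWhile_filter_sorted:
  assumes "sorted_wrt bef (map fst xs)" "\<And>a b. bef a b \<Longrightarrow> P b \<Longrightarrow> P a"
  shows "takeWhile (\<lambda>x. P (fst x)) xs = filter (\<lambda>x. P (fst x)) xs"
  using assms(1)
proof (induction xs)
  case Nil then show ?case by simp
next
  case (Cons x xs)
  show ?case
  proof (cases "P (fst x)")
    case True then show ?thesis using Cons by simp
  next
    case False
    have "\<forall>z\<in>set xs. \<not> P (fst z)"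
    proof
      fix z assume "z \<in> set xs"
      then have "bef (fst x) (fst z)" using Cons.prems by simp
      then show "\<not> P (fst z)" using False assms(2) by blast
    qed
    then show ?thesis using False by simp
  qed
qed

definition beq :: "nat \<times> nat \<Rightarrow> nat \<times> nat \<Rightarrow> bool" where "beq p q = (p = q \<or> bef p q)"

lemma surv_count:
  assumes srt: "sorted_wrt bef (map fst xs)" and yu: "y \<in> set (unbracketed xs [])"
  shows "length (filter (\<lambda>x. \<not> snd x \<and> bef y (fst x) \<and> beq (fst x) t) xs)
         \<le> length (filter (\<lambda>x. snd x \<and> bef y (fst x) \<and> beq (fst x) t) xs)"
proof (rule ccontr)
  assume A: "\<not> ?thesis"
  have "(y,True) \<in> set xs" using ub_mem[OF yu] .
  then obtain pre post where xs: "xs = pre @ (y,True) # post" by (meson split_list)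
  have dist: "distinct (map fst xs)" using sorted_bef_distinct[OF srt] .
  have s2: "sorted_wrt bef (map fst pre @ y # map fst post)" using srt xs by simp
  have preb: "\<forall>x\<in>set pre. bef (fst x) y" using s2 by (auto simp: sorted_wrt_append)
  have postb: "\<forall>x\<in>set post. bef y (fst x)" using s2 by (auto simp: sorted_wrt_append)
  have srtpost: "sorted_wrt bef (map fst post)" using s2 by (auto simp: sorted_wrt_append)
  have yn1: "y \<notin> fst ` set pre" "y \<notin> fst ` set post" using dist xs by auto
  define P where "P = (\<lambda>z. beq z t)"
  have Pdc: "\<And>a b. bef a b \<Longrightarrow> P b \<Longrightarrow> P a" unfolding P_def beq_def using bef_trans by blast
  define q where "q = takeWhile (\<lambda>x. P (fst x)) post"
  define rest where "rest = dropWhile (\<lambda>x. P (fst x)) post"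
  have qr: "post = q @ rest" unfolding q_def rest_def by simp
  have qf: "q = filter (\<lambda>x. P (fst x)) post" unfolding q_def using takeWhile_filter_sorted[OF srtpost Pdc] .
  have f1: "filter (\<lambda>x. \<not> snd x \<and> bef y (fst x) \<and> beq (fst x) t) xs = filter (\<lambda>x. \<not> snd x) q"
  proof -
    have "filter (\<lambda>x. \<not> snd x \<and> bef y (fst x) \<and> beq (fst x) t) pre = []"
      using preb bef_asym by (auto simp: filter_empty_conv)
    moreover have "filter (\<lambda>x. \<not> snd x \<and> bef y (fst x) \<and> beq (fst x) t) post = filter (\<lambda>x. \<not> snd x) q"
      unfolding qf filter_filter using postb by (auto simp: P_def intro!: filter_cong)
    ultimately show ?thesis using xs by simp
  qed
  have f2: "filter (\<lambda>x. snd x \<and> bef y (fst x) \<and> beq (fst x) t) xs = filter snd q"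
  proof -
    have "filter (\<lambda>x. snd x \<and> bef y (fst x) \<and> beq (fst x) t) pre = []"
      using preb bef_asym by (auto simp: filter_empty_conv)
    moreover have "filter (\<lambda>x. snd x \<and> bef y (fst x) \<and> beq (fst x) t) post = filter snd q"
      unfolding qf filter_filter using postb by (auto simp: P_def intro!: filter_cong)
    ultimately show ?thesis using xs by (simp add: bef_irrefl)
  qed
  have "cntT q + length ([]::(nat\<times>nat) list) < cntF q" using A f1 f2 by (simp add: cntF_def cntT_def)
  from ub_pop[OF this, of rest "y # unbracketed pre []"] obtain zs m where
    h: "1 \<le> m" "unbracketed (q @ rest) (y # unbracketed pre []) = zs @ drop m (y # unbracketed pre [])"
       "set zs \<subseteq> {p. (p,True) \<in> set (q @ rest)}" by auto
  have u: "unbracketed xs [] = unbracketed post (y # unbracketed pre [])" using xs by (simp add: ub_append)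
  from ub_shape[of pre "[]"] obtain zs0 m0 where h0: "unbracketed pre [] = zs0 @ drop m0 []" "set zs0 \<subseteq> {p. (p,True) \<in> set pre}" by blast
  have "y \<in> set zs \<or> y \<in> set (drop m (y # unbracketed pre []))" using yu u h(2) qr by auto
  moreover have "y \<notin> set zs" using h(3) qr yn1 by force
  moreover have "y \<notin> set (drop m (y # unbracketed pre []))"
  proof
    assume "y \<in> set (drop m (y # unbracketed pre []))"
    then have "y \<in> set (unbracketed pre [])" using h(1) by (cases m) (auto dest: in_set_dropD)
    then show False using h0 yn1 by force
  qed
  ultimately show False by blast
qed

lemma surv_last:
  assumes srt: "sorted_wrt bef (map fst xs)" and ne: "unbracketed xs [] \<noteq> []"
    and yl: "last (unbracketed xs []) = y"
    and w: "(w,True) \<in> set xs" "bef w y" and nb: "\<And>z. \<not> (bef w z \<and> bef z y)"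
  shows False
proof -
  have yu: "y \<in> set (unbracketed xs [])" using ne yl by auto
  have "(y,True) \<in> set xs" using ub_mem[OF yu] .
  then obtain pre post where xs: "xs = pre @ (y,True) # post" by (meson split_list)
  have dist: "distinct (map fst xs)" using sorted_bef_distinct[OF srt] .
  have s2: "sorted_wrt bef (map fst pre @ y # map fst post)" using srt xs by simp
  have postb: "\<forall>x\<in>set post. bef y (fst x)" using s2 by (auto simp: sorted_wrt_append)
  have srtpre: "sorted_wrt bef (map fst pre)" using s2 by (auto simp: sorted_wrt_append)
  have yn1: "y \<notin> fst ` set pre" "y \<notin> fst ` set post" using dist xs by auto
  have wpre: "(w,True) \<in> set pre"
  proof -
    have "(w,True) \<noteq> (y,True)" using w(2) bef_irrefl[of y] by auto
    moreover have "(w,True) \<notin> set post"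
    proof
      assume "(w,True) \<in> set post"
      then have "bef y w" using postb by force
      then show False using w(2) bef_asym by blast
    qed
    ultimately show ?thesis using w(1) xs by auto
  qed
  then have "pre \<noteq> []" by auto
  then obtain pre' vb where pre: "pre = pre' @ [vb]" by (metis rev_exhaust)
  obtain v b where vb: "vb = (v,b)" by (cases vb)
  have vy: "bef v y" using s2 pre vb by (auto simp: sorted_wrt_append)
  have "v = w"
  proof (rule ccontr)
    assume "v \<noteq> w"
    then have "(w,True) \<in> set pre'" using wpre pre vb by auto
    then have "bef w v" using srtpre pre vb by (force simp: sorted_wrt_append)
    then show False using nb vy by blast
  qed
  have dpre: "distinct (map fst pre)" using dist xs by simp
  have "b = True"
  proof (rule ccontr)
    assume "b \<noteq> True"
    then have "(w,True) \<in> set pre'" using wpre pre vb \<open>v = w\<close> by auto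
    then show False using dpre pre vb \<open>v = w\<close> by force
  qed
  have u: "unbracketed xs [] = unbracketed post (y # w # unbracketed pre' [])"
    using xs pre vb \<open>v = w\<close> \<open>b = True\<close> by (simp add: ub_append)
  from ub_shape[of post "y # w # unbracketed pre' []"] obtain zs m where
    h: "unbracketed post (y # w # unbracketed pre' []) = zs @ drop m (y # w # unbracketed pre' [])"
      "set zs \<subseteq> {p. (p,True) \<in> set post}" by blast
  from ub_shape[of pre' "[]"] obtain zs0 m0 where
    h0: "unbracketed pre' [] = zs0 @ drop m0 []" "set zs0 \<subseteq> {p. (p,True) \<in> set pre'}" by blast
  have st0: "set (unbracketed pre' []) \<subseteq> fst ` set pre" using h0 pre by force
  have wfp: "w \<in> fst ` set pre" using wpre by force
  show False
  proof (cases m)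
    case 0
    then have "last (unbracketed xs []) = last (w # unbracketed pre' [])" using u h by simp
    moreover have "last (w # unbracketed pre' []) \<in> set (w # unbracketed pre' [])" by (rule last_in_set) simp
    ultimately have "y \<in> set (w # unbracketed pre' [])" using yl by simp
    then show False using st0 wfp yn1 by auto
  next
    case (Suc m')
    have "y \<in> set zs \<or> y \<in> set (drop m' (w # unbracketed pre' []))" using yu u h Suc by auto
    moreover have "y \<notin> set zs" using h(2) yn1 by force
    moreover have "y \<notin> set (drop m' (w # unbracketed pre' []))"
    proof
      assume "y \<in> set (drop m' (w # unbracketed pre' []))"
      then have "y \<in> set (w # unbracketed pre' [])" by (auto dest: in_set_dropD)
      then show False using st0 wfp yn1 by auto
    qed
    ultimately show False by blast
  qed
qed


lemma sorted_row: "sorted_wrt bef (map (\<lambda>c. (r,c)) [a..<b])"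
  unfolding sorted_wrt_map by (rule sorted_wrt_mono_rel[OF _ sorted_wrt_upt]) (simp add: bef_def)

lemma sorted_rows:
  "sorted_wrt bef (concat (map (\<lambda>r. filter (P r) (map (\<lambda>c. (r, c)) [a r..<b r])) (rev [0..<n])))"
proof (induction n)
  case 0 then show ?case by simp
next
  case (Suc n)
  have s1: "sorted_wrt bef (filter (P n) (map (\<lambda>c. (n, c)) [a n..<b n]))"
    by (rule sorted_wrt_filter[OF sorted_row])
  have cross: "\<forall>x\<in>set (filter (P n) (map (\<lambda>c. (n, c)) [a n..<b n])).
     \<forall>y\<in>set (concat (map (\<lambda>r. filter (P r) (map (\<lambda>c. (r, c)) [a r..<b r])) (rev [0..<n]))). bef x y"
    by (auto simp: bef_def)
  show ?case using s1 Suc.IH cross by (simp add: sorted_wrt_append)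
qed

lemma sorted_reading: "sorted_wrt bef (reading_boxes lam mu T)"
  unfolding reading_boxes_def by (rule sorted_rows)

lemma set_reading: "set (reading_boxes lam mu T) = {p \<in> boxes lam mu. even (T p)}"
proof -
  have "set (reading_boxes lam mu T) = {(r,c). r < length lam \<and> rowlen mu r \<le> c \<and> c < rowlen lam r \<and> even (T (r,c))}"
    unfolding reading_boxes_def by auto
  also have "\<dots> = {p \<in> boxes lam mu. even (T p)}"
    unfolding boxes_def rowlen_def by (auto split: if_splits)
  finally show ?thesis .
qed

lemma ij_fst: "map fst (ij_subword lam mu i T) = filter (\<lambda>p. T p = unp i \<or> T p = unp (Suc i)) (reading_boxes lam mu T)"
  unfolding ij_subword_def by (simp add: comp_def)

lemma sorted_ij: "sorted_wrt bef (map fst (ij_subword lam mu i T))"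
  unfolding ij_fst by (rule sorted_wrt_filter[OF sorted_reading])

lemma ij_mem: "(p, b) \<in> set (ij_subword lam mu i T) \<longleftrightarrow> p \<in> boxes lam mu \<and> (T p = unp i \<or> T p = unp (Suc i)) \<and> b = (T p = unp (Suc i))"
  unfolding ij_subword_def using set_reading[of lam mu T] by (auto simp: unp_def)

lemma count_ij:
  "length (filter (\<lambda>x. (snd x = B) \<and> bef y (fst x) \<and> beq (fst x) t) (ij_subword lam mu i T))
   = card {z \<in> boxes lam mu. bef y z \<and> beq z t \<and> T z = (if B then unp (Suc i) else unp i)}"
proof -
  define F where "F = filter (\<lambda>p. T p = unp i \<or> T p = unp (Suc i)) (reading_boxes lam mu T)"
  have dF: "distinct F" unfolding F_def using sorted_bef_distinct[OF sorted_reading] by simp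
  have ij: "ij_subword lam mu i T = map (\<lambda>p. (p, T p = unp (Suc i))) F" unfolding ij_subword_def F_def ..
  have "length (filter (\<lambda>x. (snd x = B) \<and> bef y (fst x) \<and> beq (fst x) t) (ij_subword lam mu i T))
     = length (filter (\<lambda>p. ((T p = unp (Suc i)) = B) \<and> bef y p \<and> beq p t) F)"
    unfolding ij by (simp add: filter_map comp_def)
  also have "\<dots> = card ({p. ((T p = unp (Suc i)) = B) \<and> bef y p \<and> beq p t} \<inter> set F)"
    by (rule distinct_length_filter[OF dF])
  also have "({p. ((T p = unp (Suc i)) = B) \<and> bef y p \<and> beq p t} \<inter> set F)
      = {z \<in> boxes lam mu. bef y z \<and> beq z t \<and> T z = (if B then unp (Suc i) else unp i)}"
  proof (rule set_eqI)
    fix z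
    have sF: "z \<in> set F \<longleftrightarrow> z \<in> boxes lam mu \<and> even (T z) \<and> (T z = unp i \<or> T z = unp (Suc i))"
      unfolding F_def using set_reading[of lam mu T] by simp
    have ne: "unp i \<noteq> unp (Suc i)" by (simp add: unp_def)
    have ev: "even (unp i)" "even (unp (Suc i))" by (simp_all add: unp_def)
    show "z \<in> ({p. ((T p = unp (Suc i)) = B) \<and> bef y p \<and> beq p t} \<inter> set F) \<longleftrightarrow>
      z \<in> {z \<in> boxes lam mu. bef y z \<and> beq z t \<and> T z = (if B then unp (Suc i) else unp i)}"
      using ne ev sF by (cases B) auto
  qed
  finally show ?thesis .
qed


lemma ebox_basic:
  assumes "e_box lam mu i T = Some y"
  shows "y \<in> boxes lam mu" "T y = unp (Suc i)"
proof -
  let ?u = "unbracketed (ij_subword lam mu i T) []"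
  have ne: "?u \<noteq> []" and yl: "last ?u = y" using assms unfolding e_box_def Let_def by (auto split: if_splits)
  have "y \<in> set ?u" using ne yl by auto
  then have "(y,True) \<in> set (ij_subword lam mu i T)" by (rule ub_mem)
  then show "y \<in> boxes lam mu" "T y = unp (Suc i)" unfolding ij_mem by auto
qed

lemma ebox_count:
  assumes "e_box lam mu i T = Some y"
  shows "card {z \<in> boxes lam mu. bef y z \<and> beq z t \<and> T z = unp i}
       \<le> card {z \<in> boxes lam mu. bef y z \<and> beq z t \<and> T z = unp (Suc i)}"
proof -
  let ?u = "unbracketed (ij_subword lam mu i T) []"
  have ne: "?u \<noteq> []" and yl: "last ?u = y" using assms unfolding e_box_def Let_def by (auto split: if_splits)
  have yu: "y \<in> set ?u" using ne yl by auto
  have c: "length (filter (\<lambda>x. \<not> snd x \<and> bef y (fst x) \<and> beq (fst x) t) (ij_subword lam mu i T))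
         \<le> length (filter (\<lambda>x. snd x \<and> bef y (fst x) \<and> beq (fst x) t) (ij_subword lam mu i T))"
    by (rule surv_count[OF sorted_ij yu])
  have e1: "length (filter (\<lambda>x. \<not> snd x \<and> bef y (fst x) \<and> beq (fst x) t) (ij_subword lam mu i T))
     = card {z \<in> boxes lam mu. bef y z \<and> beq z t \<and> T z = unp i}"
    using count_ij[of False y t lam mu i T] by simp
  have e2: "length (filter (\<lambda>x. snd x \<and> bef y (fst x) \<and> beq (fst x) t) (ij_subword lam mu i T))
     = card {z \<in> boxes lam mu. bef y z \<and> beq z t \<and> T z = unp (Suc i)}"
    using count_ij[of True y t lam mu i T] by simp
  show ?thesis using c e1 e2 by simp
qed

lemma ebox_left:
  assumes "e_box lam mu i T = Some (r,c)" "1 \<le> c" "(r, c - 1) \<in> boxes lam mu" "T (r, c - 1) = unp (Suc i)"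
  shows False
proof -
  let ?u = "unbracketed (ij_subword lam mu i T) []"
  have ne: "?u \<noteq> []" and yl: "last ?u = (r,c)" using assms(1) unfolding e_box_def Let_def by (auto split: if_splits)
  have w: "((r, c-1), True) \<in> set (ij_subword lam mu i T)" unfolding ij_mem using assms(3,4) by simp
  have b: "bef (r, c-1) (r,c)" using assms(2) by (simp add: bef_def)
  have nb: "\<And>z. \<not> (bef (r, c-1) z \<and> bef z (r,c))" by (auto simp: bef_def)
  show False by (rule surv_last[OF sorted_ij ne yl w b nb])
qed


lemma unp_eq: "unp i = 2*i" by (simp add: unp_def)
lemma prm_Suc: "prm (Suc i) = 2*i+1" by (simp add: prm_def)

definition mes :: "nat \<times> nat \<Rightarrow> int" where "mes q = int (snd q) - int (fst q)"

definition stp :: "(nat \<times> nat \<Rightarrow> nat) \<Rightarrow> nat \<Rightarrow> nat \<times> nat \<Rightarrow> nat \<times> nat \<Rightarrow> bool" where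
  "stp T i q q' = (T q' \<in> {unp i, prm (Suc i)} \<and> ((fst q = Suc (fst q') \<and> snd q' = snd q) \<or> (fst q' = fst q \<and> snd q' = Suc (snd q))))"

lemma stp_mes: "stp T i q q' \<Longrightarrow> mes q' = mes q + 1"
  unfolding stp_def mes_def by auto

lemma reach_stp: "rib_reach T i s q \<Longrightarrow> stp T i q q' \<Longrightarrow> rib_reach T i s q'"
proof -
  assume r: "rib_reach T i s q" and st: "stp T i q q'"
  obtain a x where q: "q = (a,x)" by (cases q)
  obtain a' x' where q': "q' = (a',x')" by (cases q')
  show ?thesis
  proof (cases "a = Suc a' \<and> x' = x")
    case True
    then show ?thesis using r st q q' by (auto simp: stp_def intro: rib_reach.north)
  next
    case False
    then have "a' = a \<and> x' = Suc x" using st q q' by (auto simp: stp_def)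
    then show ?thesis using r st q q' by (auto simp: stp_def intro: rib_reach.east)
  qed
qed

lemma reach_inv: "rib_reach T i s q \<Longrightarrow> q = s \<or> (\<exists>q0. rib_reach T i s q0 \<and> stp T i q0 q)"
proof (induction rule: rib_reach.induct)
  case start then show ?case by simp
next
  case (north r c)
  then show ?case by (intro disjI2 exI[of _ "(Suc r, c)"]) (auto simp: stp_def)
next
  case (east r c)
  then show ?case by (intro disjI2 exI[of _ "(r, c)"]) (auto simp: stp_def)
qed

lemma reach_mes: "rib_reach T i s q \<Longrightarrow> mes s \<le> mes q"
  by (induction rule: rib_reach.induct) (auto simp: mes_def)

lemma reach_mes_strict: "rib_reach T i s q \<Longrightarrow> q \<noteq> s \<Longrightarrow> mes s < mes q"
proof -
  assume r: "rib_reach T i s q" and ne: "q \<noteq> s"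
  then obtain q0 where "rib_reach T i s q0" "stp T i q0 q" using reach_inv by blast
  then show ?thesis using reach_mes stp_mes by fastforce
qed

lemma reach_row: "rib_reach T i s q \<Longrightarrow> fst q \<le> fst s"
  by (induction rule: rib_reach.induct) auto

lemma reach_G: "rib_reach T i s q \<Longrightarrow> fst q \<le> a \<Longrightarrow> a < fst s \<Longrightarrow> \<exists>x3. rib_reach T i s (Suc a, x3) \<and> rib_reach T i s (a, x3)"
proof (induction rule: rib_reach.induct)
  case start then show ?case by simp
next
  case (north r c)
  show ?case
  proof (cases "a = r")
    case True
    then show ?thesis using north.hyps by (intro exI[of _ c]) (auto intro: rib_reach.north)
  next
    case False
    then show ?thesis using north by simp
  qed
next
  case (east r c)
  then show ?case by simp
qed

lemma reach_mid: "rib_reach T i s q \<Longrightarrow> mes s \<le> k \<Longrightarrow> k \<le> mes q \<Longrightarrow> \<exists>q'. rib_reach T i s q' \<and> mes q' = k"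
proof (induction rule: rib_reach.induct)
  case start then show ?case by (intro exI[of _ s]) (auto intro: rib_reach.start)
next
  case (north r c)
  show ?case
  proof (cases "k = mes (r,c)")
    case True then show ?thesis using north.hyps by (intro exI[of _ "(r,c)"]) (auto intro: rib_reach.north)
  next
    case False then show ?thesis using north by (simp add: mes_def)
  qed
next
  case (east r c)
  show ?case
  proof (cases "k = mes (r,Suc c)")
    case True then show ?thesis using east.hyps by (intro exI[of _ "(r,Suc c)"]) (auto intro: rib_reach.east)
  next
    case False then show ?thesis using east by (simp add: mes_def)
  qed
qed

context
  fixes k lam mu T assumes tab: "primed_tableau k lam mu T"
begin

lemma ribS: "T s \<in> {unp i, prm (Suc i)} \<Longrightarrow> rib_reach T i s q \<Longrightarrow> T q \<in> {unp i, prm (Suc i)}"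
proof -
  assume s: "T s \<in> {unp i, prm (Suc i)}" and r: "rib_reach T i s q"
  from r s show ?thesis by (induction rule: rib_reach.induct) auto
qed

lemma ribB: "1 \<le> i \<Longrightarrow> T s \<in> {unp i, prm (Suc i)} \<Longrightarrow> rib_reach T i s q \<Longrightarrow> q \<in> boxes lam mu"
proof -
  assume i: "1 \<le> i" and s: "T s \<in> {unp i, prm (Suc i)}" and r: "rib_reach T i s q"
  have "T q \<in> {unp i, prm (Suc i)}" using ribS[OF s r] .
  then have "T q \<noteq> 0" using i by (auto simp: unp_eq prm_Suc)
  then show ?thesis by (rule tab_nz[OF tab])
qed

lemma det_local:
  assumes i: "1 \<le> i" and q: "(a,x) \<in> boxes lam mu" "T (a,x) \<in> {unp i, prm (Suc i)}"
  shows "\<not> (0 < a \<and> T (a - 1, x) \<in> {unp i, prm (Suc i)} \<and> T (a, Suc x) \<in> {unp i, prm (Suc i)})"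
proof
  assume h: "0 < a \<and> T (a - 1, x) \<in> {unp i, prm (Suc i)} \<and> T (a, Suc x) \<in> {unp i, prm (Suc i)}"
  have bN: "(a-1, x) \<in> boxes lam mu" using h i by (intro tab_nz[OF tab]) (auto simp: unp_eq prm_Suc)
  have bE: "(a, Suc x) \<in> boxes lam mu" using h i by (intro tab_nz[OF tab]) (auto simp: unp_eq prm_Suc)
  have sa: "Suc (a - 1) = a" using h by simp
  have c1: "T (a-1, x) \<le> T (a,x)" using tab_col_step[OF tab bN] bN q(1) sa by simp
  have c2: "T (a,x) \<le> T (a, Suc x)" using tab_row_step[OF tab q(1) bE] .
  show False
  proof (cases "T (a,x) = unp i")
    case True
    then have "T (a-1,x) = unp i" using c1 h by (auto simp: unp_eq prm_Suc)
    then have "a - 1 = a" using tab_col_even[OF tab bN q(1)] True by (simp add: unp_eq)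
    moreover have "0 < a" using h by blast
    ultimately show False by linarith
  next
    case False
    then have t: "T (a,x) = prm (Suc i)" using q(2) by simp
    then have "T (a,Suc x) = prm (Suc i)" using c2 h by (auto simp: unp_eq prm_Suc)
    then have "x = Suc x" using tab_row_odd[OF tab q(1) bE] t by (simp add: prm_Suc)
    then show False by simp
  qed
qed

end


definition endc :: "(nat \<times> nat \<Rightarrow> nat) \<Rightarrow> nat \<Rightarrow> nat \<times> nat \<Rightarrow> bool" where
  "endc T i q = (case q of (r, c) \<Rightarrow> \<not> (0 < r \<and> T (r - 1, c) \<in> {unp i, prm (Suc i)})
                         \<and> T (r, Suc c) \<notin> {unp i, prm (Suc i)})"

lemma endc_iff: "endc T i q \<longleftrightarrow> \<not> (\<exists>q'. stp T i q q')"
proof -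
  obtain a x where q: "q = (a,x)" by (cases q)
  show ?thesis
  proof
    assume e: "endc T i q"
    show "\<not> (\<exists>q'. stp T i q q')"
    proof
      assume "\<exists>q'. stp T i q q'"
      then obtain a' x' where st: "stp T i q (a',x')" by auto
      show False
      proof (cases "a = Suc a'")
        case True
        then have "x' = x \<or> a' = a" using st q by (auto simp: stp_def)
        then show False using e st q True by (auto simp: stp_def endc_def)
      next
        case False
        then have "a' = a" "x' = Suc x" using st q by (auto simp: stp_def)
        then show False using e st q by (auto simp: stp_def endc_def)
      qed
    qed
  next
    assume n: "\<not> (\<exists>q'. stp T i q q')"
    have 1: "\<not> (0 < a \<and> T (a - 1, x) \<in> {unp i, prm (Suc i)})"
    proof
      assume h: "0 < a \<and> T (a - 1, x) \<in> {unp i, prm (Suc i)}"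
      then have "stp T i q (a - 1, x)" using q by (auto simp: stp_def)
      then show False using n by blast
    qed
    have 2: "T (a, Suc x) \<notin> {unp i, prm (Suc i)}"
    proof
      assume h: "T (a, Suc x) \<in> {unp i, prm (Suc i)}"
      then have "stp T i q (a, Suc x)" using q by (simp add: stp_def)
      then show False using n by blast
    qed
    show "endc T i q" using 1 2 q by (simp add: endc_def)
  qed
qed

context
  fixes k lam mu T i s
  assumes tab: "primed_tableau k lam mu T" and i1: "1 \<le> i" and sS: "T s \<in> {unp i, prm (Suc i)}"
begin

lemma uniq_succ:
  assumes r: "rib_reach T i s q" and s1: "stp T i q q1" and s2: "stp T i q q2"
  shows "q1 = q2"
proof -
  obtain a x where q: "q = (a,x)" by (cases q)
  have bq: "(a,x) \<in> boxes lam mu" using ribB[OF tab i1 sS r] q by simp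
  have tq: "T (a,x) \<in> {unp i, prm (Suc i)}" using ribS[OF tab sS r] q by simp
  have dl: "\<not> (0 < a \<and> T (a - 1, x) \<in> {unp i, prm (Suc i)} \<and> T (a, Suc x) \<in> {unp i, prm (Suc i)})"
    by (rule det_local[OF tab i1 bq tq])
  obtain a1 x1 where q1: "q1 = (a1,x1)" by (cases q1)
  obtain a2 x2 where q2: "q2 = (a2,x2)" by (cases q2)
  have c1: "(a = Suc a1 \<and> x1 = x \<and> T (a1,x1) \<in> {unp i, prm (Suc i)}) \<or> (a1 = a \<and> x1 = Suc x \<and> T (a1,x1) \<in> {unp i, prm (Suc i)})"
    using s1 q q1 by (auto simp: stp_def)
  have c2: "(a = Suc a2 \<and> x2 = x \<and> T (a2,x2) \<in> {unp i, prm (Suc i)}) \<or> (a2 = a \<and> x2 = Suc x \<and> T (a2,x2) \<in> {unp i, prm (Suc i)})"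
    using s2 q q2 by (auto simp: stp_def)
  show ?thesis
  proof (cases "a = Suc a1 \<and> x1 = x")
    case True
    show ?thesis
    proof (cases "a = Suc a2 \<and> x2 = x")
      case True2: True
      then show ?thesis using True q1 q2 by simp
    next
      case False
      then have "a2 = a \<and> x2 = Suc x \<and> T (a2,x2) \<in> {unp i, prm (Suc i)}" using c2 by blast
      moreover have "0 < a \<and> T (a - 1, x) \<in> {unp i, prm (Suc i)}" using True c1 by auto
      ultimately show ?thesis using dl by auto
    qed
  next
    case False
    then have h1: "a1 = a \<and> x1 = Suc x \<and> T (a1,x1) \<in> {unp i, prm (Suc i)}" using c1 by blast
    show ?thesis
    proof (cases "a = Suc a2 \<and> x2 = x")
      case True
      then have "0 < a \<and> T (a - 1, x) \<in> {unp i, prm (Suc i)}" using c2 by auto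
      then show ?thesis using dl h1 by auto
    next
      case False2: False
      then have "a2 = a \<and> x2 = Suc x" using c2 by blast
      then show ?thesis using h1 q1 q2 by simp
    qed
  qed
qed

lemma mes_inj_aux:
  "\<forall>q q'. rib_reach T i s q \<and> rib_reach T i s q' \<and> mes q = mes q' \<and> mes q = mes s + int n \<longrightarrow> q = q'"
proof (induction n)
  case 0
  show ?case
  proof (intro allI impI)
    fix q q' assume h: "rib_reach T i s q \<and> rib_reach T i s q' \<and> mes q = mes q' \<and> mes q = mes s + int 0"
    have "q = s" using h reach_mes_strict by fastforce
    moreover have "q' = s" using h reach_mes_strict by fastforce
    ultimately show "q = q'" by simp
  qed
next
  case (Suc n)
  show ?case
  proof (intro allI impI)
    fix q q' assume h: "rib_reach T i s q \<and> rib_reach T i s q' \<and> mes q = mes q' \<and> mes q = mes s + int (Suc n)"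
    have "q \<noteq> s" using h by auto
    then obtain p1 where p1: "rib_reach T i s p1" "stp T i p1 q" using h reach_inv by blast
    have "q' \<noteq> s" using h by auto
    then obtain p2 where p2: "rib_reach T i s p2" "stp T i p2 q'" using h reach_inv by blast
    have m: "mes p1 = mes p2" "mes p1 = mes s + int n" using stp_mes[OF p1(2)] stp_mes[OF p2(2)] h by auto
    have "p1 = p2" by (intro Suc.IH[THEN spec[of _ p1], THEN spec[of _ p2], THEN mp] conjI p1(1) p2(1) m)
    then show "q = q'" using uniq_succ[OF p1(1) p1(2)] p2(2) by simp
  qed
qed

lemma mes_inj: "rib_reach T i s q \<Longrightarrow> rib_reach T i s q' \<Longrightarrow> mes q = mes q' \<Longrightarrow> q = q'"
proof -
  assume r: "rib_reach T i s q" "rib_reach T i s q'" and e: "mes q = mes q'"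
  define n where "n = nat (mes q - mes s)"
  have "mes q = mes s + int n" using reach_mes[OF r(1)] unfolding n_def by simp
  then show ?thesis by (intro mes_inj_aux[of n, THEN spec[of _ q], THEN spec[of _ q'], THEN mp] conjI r e)
qed

lemma end_exists: "\<exists>q. rib_reach T i s q \<and> endc T i q"
proof -
  define R where "R = {q. rib_reach T i s q}"
  have "R \<subseteq> boxes lam mu"
  proof
    fix q assume "q \<in> R"
    then have "rib_reach T i s q" unfolding R_def by simp
    then show "q \<in> boxes lam mu" by (rule ribB[OF tab i1 sS])
  qed
  then have fin: "finite R" using boxes_finite[OF tab] by (rule finite_subset)
  have ne: "s \<in> R" unfolding R_def by (simp add: rib_reach.start)
  have fm: "finite (mes ` R)" using fin by simp
  have "Max (mes ` R) \<in> mes ` R" using fm ne by (intro Max_in) auto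
  then obtain q where q: "q \<in> R" "mes q = Max (mes ` R)" by auto
  have "endc T i q"
    unfolding endc_iff
  proof
    assume "\<exists>q'. stp T i q q'"
    then obtain q' where st: "stp T i q q'" by blast
    have "q' \<in> R" using reach_stp q(1) st unfolding R_def by blast
    then have "mes q' \<le> Max (mes ` R)" using fm by simp
    then show False using stp_mes[OF st] q(2) by simp
  qed
  then show ?thesis using q(1) unfolding R_def by blast
qed

lemma end_unique: "rib_reach T i s q1 \<Longrightarrow> endc T i q1 \<Longrightarrow> rib_reach T i s q2 \<Longrightarrow> endc T i q2 \<Longrightarrow> q1 = q2"
proof -
  have key: "mes q1 < mes q2 \<Longrightarrow> False" if r1: "rib_reach T i s q1" and e1: "endc T i q1"
    and r2: "rib_reach T i s q2" for q1 q2
  proof -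
    assume lt: "mes q1 < mes q2"
    have "mes s \<le> mes q1 + 1" using reach_mes[OF r1] by simp
    then obtain q3 where q3: "rib_reach T i s q3" "mes q3 = mes q1 + 1" using reach_mid[OF r2] lt by fastforce
    have "q3 \<noteq> s" using q3(2) reach_mes[OF r1] by auto
    then obtain q4 where q4: "rib_reach T i s q4" "stp T i q4 q3" using reach_inv[OF q3(1)] by blast
    have "mes q4 = mes q1" using stp_mes[OF q4(2)] q3(2) by simp
    then have "q4 = q1" using mes_inj[OF q4(1) r1] by simp
    then show False using q4(2) e1 unfolding endc_iff by blast
  qed
  assume r1: "rib_reach T i s q1" and e1: "endc T i q1" and r2: "rib_reach T i s q2" and e2: "endc T i q2"
  show "q1 = q2"
  proof (cases "mes q1 = mes q2")
    case True then show ?thesis using mes_inj[OF r1 r2] by simp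
  next
    case False
    then have "mes q1 < mes q2 \<or> mes q2 < mes q1" by linarith
    then show ?thesis using key[OF r1 e1 r2] key[OF r2 e2 r1] by blast
  qed
qed

lemma rib_end_prop: "rib_reach T i s (rib_end T i s) \<and> endc T i (rib_end T i s)"
proof -
  have ex1: "\<exists>!q. rib_reach T i s q \<and> endc T i q"
    using end_exists end_unique by blast
  have "rib_end T i s = (THE q. rib_reach T i s q \<and> endc T i q)"
    unfolding rib_end_def endc_def ..
  then show ?thesis using theI'[OF ex1] by simp
qed

end


lemma card_lt_inj:
  assumes "finite B" "f ` A \<subseteq> B - {e}" "e \<in> B" "inj_on f A"
  shows "card A < card B"
proof -
  have "card A = card (f ` A)" using card_image[OF assms(4)] by simp
  also have "\<dots> \<le> card (B - {e})" using assms(1,2) by (intro card_mono) auto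
  also have "\<dots> < card B" using assms(1,3) by (rule card_Diff1_less)
  finally show ?thesis .
qed

context
  fixes k i :: nat and lam mu :: "nat list" and T :: "nat \<times> nat \<Rightarrow> nat"
  assumes tab: "primed_tableau k lam mu T" and i1: "1 \<le> i"
begin

lemma box_of_val: "T q = v \<Longrightarrow> 1 \<le> v \<Longrightarrow> q \<in> boxes lam mu"
  by (rule tab_nz[OF tab]) simp

lemma case2_NW:
  assumes eb: "e_box lam mu i T = Some (r,c)" and c1: "1 \<le> c" and r1: "1 \<le> r"
    and w: "T (r, c - 1) = 2*i+1" and nw: "T (r - 1, c - 1) = 2*i"
  shows False
proof -
  define a where "a = r - 1"
  have ra: "r = Suc a" using r1 unfolding a_def by simp
  have yb: "(r,c) \<in> boxes lam mu" and ty: "T (r,c) = 2*i+2"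
    using ebox_basic[OF eb] by (simp_all add: unp_eq)
  have nw': "T (a, c-1) = 2*i" using nw unfolding a_def .
  have nwb: "(a, c-1) \<in> boxes lam mu" using box_of_val[OF nw'] i1 by simp
  define E where "E = {x. T (a,x) = 2*i}"
  have Esub: "E \<subseteq> snd ` boxes lam mu"
  proof
    fix x assume "x \<in> E"
    then have "T (a,x) = 2*i" unfolding E_def by simp
    then have "(a,x) \<in> boxes lam mu" using box_of_val i1 by simp
    then show "x \<in> snd ` boxes lam mu" by force
  qed
  have finE: "finite E" using finite_subset[OF Esub] boxes_finite[OF tab] by blast
  have cE: "c - 1 \<in> E" unfolding E_def using nw' by simp
  define e where "e = Max E"
  have eE: "e \<in> E" unfolding e_def using finE cE by (intro Max_in) auto
  have emax: "\<And>x. x \<in> E \<Longrightarrow> x \<le> e" unfolding e_def using finE by simp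
  have te: "T (a,e) = 2*i" using eE unfolding E_def by simp
  have eb2: "(a,e) \<in> boxes lam mu" using box_of_val[OF te] i1 by simp
  define Js where "Js = {z \<in> boxes lam mu. bef (r,c) z \<and> beq z (a,e) \<and> T z = unp (Suc i)}"
  define Is where "Is = {z \<in> boxes lam mu. bef (r,c) z \<and> beq z (a,e) \<and> T z = unp i}"
  have cnt: "card Is \<le> card Js" unfolding Is_def Js_def by (rule ebox_count[OF eb])
  have Jrow: "fst z = r \<and> c < snd z" if z: "z \<in> Js" for z
  proof -
    obtain a' x where zz: "z = (a',x)" by (cases z)
    have zb: "(a',x) \<in> boxes lam mu" and b1: "bef (r,c) (a',x)" and b2: "beq (a',x) (a,e)" and tz: "T (a',x) = 2*i+2"
      using z zz unfolding Js_def by (auto simp: unp_eq)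
    have "a' \<noteq> a"
    proof
      assume "a' = a"
      then have "x \<le> e" using b2 unfolding beq_def bef_def by auto
      then have "T (a,x) \<le> T (a,e)" using tab_row_mono[OF tab _ eb2] zb \<open>a' = a\<close> by simp
      then show False using tz te \<open>a' = a\<close> by simp
    qed
    moreover have "a \<le> a'" using b2 unfolding beq_def bef_def by auto
    moreover have "a' \<le> r" using b1 unfolding bef_def by auto
    ultimately have "a' = r" using ra by simp
    then show ?thesis using b1 zz unfolding bef_def by auto
  qed
  define f where "f = (\<lambda>z::nat\<times>nat. (a, snd z - 1))"
  have fim: "f ` Js \<subseteq> Is - {(a, c-1)}"
  proof
    fix w assume "w \<in> f ` Js"
    then obtain z where z: "z \<in> Js" and wz: "w = f z" by blast
    obtain x where zz: "z = (r,x)" and xc: "c < x" using Jrow[OF z] by (cases z) auto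
    have zb: "(r,x) \<in> boxes lam mu" and tz: "T (r,x) = 2*i+2" using z zz unfolding Js_def by (auto simp: unp_eq)
    have b1: "(a, x-1) \<in> boxes lam mu" by (rule tab_rect[OF tab nwb zb]) (use ra xc in auto)
    have b0: "(a, x) \<in> boxes lam mu" by (rule tab_rect[OF tab nwb zb]) (use ra xc in auto)
    have up: "T (a, x-1) \<le> 2*i" using lemL(1)[OF tab _ b0 b1] tz ra xc by simp
    have lo: "T (a, c-1) \<le> T (a, x-1)" using tab_row_mono[OF tab nwb b1] xc by simp
    have tx: "T (a, x-1) = 2*i" using up lo nw' by simp
    then have "x - 1 \<le> e" using emax unfolding E_def by simp
    then have "w \<in> Is" using wz zz b1 tx ra unfolding f_def Is_def beq_def bef_def by (auto simp: unp_eq)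
    moreover have "w \<noteq> (a, c-1)" using wz zz xc c1 unfolding f_def by auto
    ultimately show "w \<in> Is - {(a, c-1)}" by simp
  qed
  have inI: "(a, c-1) \<in> Is" using nwb nw' ra emax[OF cE] unfolding Is_def beq_def bef_def by (auto simp: unp_eq)
  have finI: "finite Is" using boxes_finite[OF tab] unfolding Is_def by simp
  have inj: "inj_on f Js"
  proof (rule inj_onI)
    fix z1 z2 assume z1: "z1 \<in> Js" and z2: "z2 \<in> Js" and e: "f z1 = f z2"
    show "z1 = z2" using Jrow[OF z1] Jrow[OF z2] e unfolding f_def by (cases z1, cases z2) auto
  qed
  have "card Js < card Is" by (rule card_lt_inj[OF finI fim inI inj])
  then show False using cnt by simp
qed

lemma case3_end:
  assumes eb: "e_box lam mu i T = Some (r,c)" and r1: "1 \<le> r"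
    and sS: "T (r - 1, c) \<in> {unp i, prm (Suc i)}"
    and tp: "T (rib_end T i (r - 1, c)) = 2*i"
  shows False
proof -
  define s where "s = (r - 1, c)"
  define p where "p = rib_end T i s"
  have sS': "T s \<in> {unp i, prm (Suc i)}" using sS unfolding s_def .
  have rp: "rib_reach T i s p" and ep: "endc T i p" using rib_end_prop[OF tab i1 sS'] unfolding p_def by auto
  obtain a b where pp: "p = (a,b)" by (cases p)
  have tp': "T (a,b) = 2*i" using tp pp unfolding p_def s_def by simp
  have pb: "(a,b) \<in> boxes lam mu" using box_of_val[OF tp'] i1 by simp
  have ar: "a \<le> r - 1" using reach_row[OF rp] pp unfolding s_def by simp
  have sb: "s \<in> boxes lam mu" using ribB[OF tab i1 sS' rib_reach.start] .
  have yb: "(r,c) \<in> boxes lam mu" and ty: "T (r,c) = 2*i+2"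
    using ebox_basic[OF eb] by (simp_all add: unp_eq)
  have eE: "T (a, Suc b) \<notin> {unp i, prm (Suc i)}" using ep pp unfolding endc_def by simp
  define Js where "Js = {z \<in> boxes lam mu. bef (r,c) z \<and> beq z (a,b) \<and> T z = unp (Suc i)}"
  define Is where "Is = {z \<in> boxes lam mu. bef (r,c) z \<and> beq z (a,b) \<and> T z = unp i}"
  have cnt: "card Is \<le> card Js" unfolding Is_def Js_def by (rule ebox_count[OF eb])
  have Jrow: "a < fst z \<and> fst z \<le> r \<and> (fst z = r \<longrightarrow> c < snd z)" if z: "z \<in> Js" for z
  proof -
    obtain a' x where zz: "z = (a',x)" by (cases z)
    have zb: "(a',x) \<in> boxes lam mu" and b1: "bef (r,c) (a',x)" and b2: "beq (a',x) (a,b)" and tz: "T (a',x) = 2*i+2"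
      using z zz unfolding Js_def by (auto simp: unp_eq)
    have "a' \<noteq> a"
    proof
      assume "a' = a"
      then have "x \<le> b" using b2 unfolding beq_def bef_def by auto
      then have "T (a,x) \<le> T (a,b)" using tab_row_mono[OF tab _ pb] zb \<open>a' = a\<close> by simp
      then show False using tz tp' \<open>a' = a\<close> by simp
    qed
    moreover have "a \<le> a'" using b2 unfolding beq_def bef_def by auto
    ultimately show ?thesis using b1 zz unfolding bef_def by auto
  qed
  define f where "f = (\<lambda>z::nat\<times>nat. (fst z - 1, snd z - 1))"
  have key: "f z \<in> Is - {(a,b)} \<and> 1 \<le> fst z \<and> 1 \<le> snd z" if z: "z \<in> Js" for z
  proof -
    obtain a' x where zz: "z = (a',x)" by (cases z)
    have zb: "(a',x) \<in> boxes lam mu" and tz: "T (a',x) = 2*i+2"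
      using z zz unfolding Js_def by (auto simp: unp_eq)
    have ja: "a < a'" "a' \<le> r" "a' = r \<longrightarrow> c < x" using Jrow[OF z] zz by auto
    define a2 where "a2 = a' - 1"
    have a2s: "a' = Suc a2" using ja unfolding a2_def by simp
    have "\<exists>x3. x3 < x \<and> (a2, x3) \<in> boxes lam mu \<and> 2*i \<le> T (a2, x3)"
    proof (cases "a' = r")
      case True
      have "T s \<ge> 2*i" using sS' by (auto simp: unp_eq prm_Suc)
      then show ?thesis using True ja sb a2s unfolding s_def by (intro exI[of _ c]) auto
    next
      case False
      have "fst p \<le> a2" "a2 < fst s" using ja False a2s pp unfolding s_def by auto
      from reach_G[OF rp this] obtain x3 where x3: "rib_reach T i s (Suc a2, x3)" "rib_reach T i s (a2, x3)" by blast
      have t3: "T (Suc a2, x3) \<in> {unp i, prm (Suc i)}" "T (a2, x3) \<in> {unp i, prm (Suc i)}"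
        using ribS[OF tab sS'] x3 by auto
      have b3: "(Suc a2, x3) \<in> boxes lam mu" "(a2, x3) \<in> boxes lam mu" using ribB[OF tab i1 sS'] x3 by auto
      have "x3 < x"
      proof (rule ccontr)
        assume "\<not> x3 < x"
        then have "T (a', x) \<le> T (a', x3)" using tab_row_mono[OF tab zb] b3(1) a2s by simp
        then show False using tz t3(1) a2s by (auto simp: unp_eq prm_Suc)
      qed
      then show ?thesis using b3(2) t3(2) by (intro exI[of _ x3]) (auto simp: unp_eq prm_Suc)
    qed
    then obtain x3 where x3: "x3 < x" "(a2, x3) \<in> boxes lam mu" "2*i \<le> T (a2, x3)" by blast
    have bx1: "(a2, x-1) \<in> boxes lam mu" by (rule tab_rect[OF tab x3(2) zb]) (use a2s x3(1) in auto)
    have bx0: "(a2, x) \<in> boxes lam mu" by (rule tab_rect[OF tab x3(2) zb]) (use a2s x3(1) in auto)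
    have up: "T (a2, x-1) \<le> 2*i" and up2: "T (a2, x) \<le> 2*i+1" using lemL[OF tab _ bx0 bx1] tz a2s x3(1) by auto
    have lo: "T (a2, x3) \<le> T (a2, x-1)" using tab_row_mono[OF tab x3(2) bx1] x3(1) by simp
    have tx: "T (a2, x-1) = 2*i" using up lo x3(3) by simp
    have bq: "beq (a2, x-1) (a,b) \<and> (a2, x-1) \<noteq> (a,b)"
    proof (cases "a2 = a")
      case False
      then have "a < a2" using ja a2s by simp
      then show ?thesis unfolding beq_def bef_def by auto
    next
      case True
      have "x \<le> b"
      proof (rule ccontr)
        assume "\<not> x \<le> b"
        then have bb: "(a, Suc b) \<in> boxes lam mu" by (intro tab_rect[OF tab pb bx0]) (use True in auto)
        have "T (a,b) \<le> T (a, Suc b)" using tab_row_step[OF tab pb bb] .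
        then have "2*i+2 \<le> T (a, Suc b)" using eE tp' by (auto simp: unp_eq prm_Suc)
        moreover have "T (a, Suc b) \<le> T (a, x)" using tab_row_mono[OF tab bb] bx0 True \<open>\<not> x \<le> b\<close> by simp
        ultimately show False using up2 True by simp
      qed
      then show ?thesis using True x3(1) unfolding beq_def bef_def by auto
    qed
    have "f z \<in> Is" using bx1 tx bq ja a2s zz unfolding f_def Is_def bef_def by (auto simp: unp_eq)
    then show ?thesis using bq zz a2s x3(1) unfolding f_def by auto
  qed
  have fim: "f ` Js \<subseteq> Is - {(a,b)}"
  proof
    fix w assume "w \<in> f ` Js"
    then obtain z where z: "z \<in> Js" and wz: "w = f z" by blast
    show "w \<in> Is - {(a,b)}" using key[OF z] wz by simp
  qed
  have inI: "(a,b) \<in> Is" using pb tp' ar r1 unfolding Is_def beq_def bef_def by (auto simp: unp_eq)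
  have finI: "finite Is" using boxes_finite[OF tab] unfolding Is_def by simp
  have inj: "inj_on f Js"
  proof (rule inj_onI)
    fix z1 z2 assume z1: "z1 \<in> Js" and z2: "z2 \<in> Js" and e: "f z1 = f z2"
    have "1 \<le> fst z1" "1 \<le> snd z1" "1 \<le> fst z2" "1 \<le> snd z2" using key[OF z1] key[OF z2] by auto
    then show "z1 = z2" using e unfolding f_def by (cases z1, cases z2) auto
  qed
  have "card Js < card Is" by (rule card_lt_inj[OF finI fim inI inj])
  then show False using cnt by simp
qed

end


definition locok :: "nat \<Rightarrow> nat list \<Rightarrow> nat list \<Rightarrow> (nat \<times> nat \<Rightarrow> nat) \<Rightarrow> nat \<Rightarrow> nat \<Rightarrow> bool" where
  "locok k lam mu T' r c =
    (1 \<le> T' (r,c) \<and> T' (r,c) \<le> 2*k \<and>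
     (1 \<le> c \<longrightarrow> (r,c-1) \<in> boxes lam mu \<longrightarrow> T' (r,c-1) \<le> T' (r,c)) \<and>
     ((r,Suc c) \<in> boxes lam mu \<longrightarrow> T' (r,c) \<le> T' (r,Suc c)) \<and>
     (1 \<le> r \<longrightarrow> (r-1,c) \<in> boxes lam mu \<longrightarrow> T' (r-1,c) \<le> T' (r,c)) \<and>
     ((Suc r,c) \<in> boxes lam mu \<longrightarrow> T' (r,c) \<le> T' (Suc r,c)) \<and>
     (odd (T' (r,c)) \<longrightarrow> (\<forall>x. (r,x) \<in> boxes lam mu \<longrightarrow> x \<noteq> c \<longrightarrow> T' (r,x) \<noteq> T' (r,c))) \<and>
     (even (T' (r,c)) \<longrightarrow> (\<forall>a. (a,c) \<in> boxes lam mu \<longrightarrow> a \<noteq> r \<longrightarrow> T' (a,c) \<noteq> T' (r,c))))"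

lemma tab_mod:
  assumes tab: "primed_tableau k lam mu T"
    and d1: "(r1,c1) \<in> boxes lam mu" and d2: "(r2,c2) \<in> boxes lam mu"
    and same: "\<And>q. q \<noteq> (r1,c1) \<Longrightarrow> q \<noteq> (r2,c2) \<Longrightarrow> T' q = T q"
    and l1: "locok k lam mu T' r1 c1" and l2: "locok k lam mu T' r2 c2"
  shows "primed_tableau k lam mu T'"
proof -
  let ?B = "boxes lam mu"
  have lk: "locok k lam mu T' r c" if "(r,c) = (r1,c1) \<or> (r,c) = (r2,c2)" for r c
    using that l1 l2 by auto
  have c2: "\<forall>p. p \<notin> ?B \<longrightarrow> T' p = 0"
  proof (intro allI impI)
    fix p assume "p \<notin> ?B"
    then have "p \<noteq> (r1,c1)" "p \<noteq> (r2,c2)" using d1 d2 by auto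
    then have "T' p = T p" by (rule same)
    then show "T' p = 0" using tab_off[OF tab \<open>p \<notin> ?B\<close>] by simp
  qed
  have c3: "\<forall>p \<in> ?B. 1 \<le> T' p \<and> T' p \<le> 2 * k"
  proof
    fix p assume pb: "p \<in> ?B"
    obtain r c where p: "p = (r,c)" by (cases p)
    show "1 \<le> T' p \<and> T' p \<le> 2 * k"
    proof (cases "(r,c) = (r1,c1) \<or> (r,c) = (r2,c2)")
      case True then show ?thesis using lk[OF True] p unfolding locok_def by simp
    next
      case False
      then have "T' p = T p" using same p by simp
      then show ?thesis using tab_range[OF tab pb] by simp
    qed
  qed
  have c4: "\<forall>r c. (r, c) \<in> ?B \<and> (r, Suc c) \<in> ?B \<longrightarrow> T' (r, c) \<le> T' (r, Suc c)"
  proof (intro allI impI)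
    fix r c assume h: "(r, c) \<in> ?B \<and> (r, Suc c) \<in> ?B"
    show "T' (r, c) \<le> T' (r, Suc c)"
    proof (cases "(r,Suc c) = (r1,c1) \<or> (r,Suc c) = (r2,c2)")
      case True then show ?thesis using lk[OF True] h unfolding locok_def by simp
    next
      case F1: False
      show ?thesis
      proof (cases "(r,c) = (r1,c1) \<or> (r,c) = (r2,c2)")
        case True then show ?thesis using lk[OF True] h unfolding locok_def by simp
      next
        case False
        then have "T' (r,c) = T (r,c)" "T' (r,Suc c) = T (r,Suc c)" using same F1 by auto
        then show ?thesis using tab_row_step[OF tab] h by simp
      qed
    qed
  qed
  have c5: "\<forall>r c. (r, c) \<in> ?B \<and> (Suc r, c) \<in> ?B \<longrightarrow> T' (r, c) \<le> T' (Suc r, c)"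
  proof (intro allI impI)
    fix r c assume h: "(r, c) \<in> ?B \<and> (Suc r, c) \<in> ?B"
    show "T' (r, c) \<le> T' (Suc r, c)"
    proof (cases "(Suc r, c) = (r1,c1) \<or> (Suc r, c) = (r2,c2)")
      case True then show ?thesis using lk[OF True] h unfolding locok_def by simp
    next
      case F1: False
      show ?thesis
      proof (cases "(r,c) = (r1,c1) \<or> (r,c) = (r2,c2)")
        case True then show ?thesis using lk[OF True] h unfolding locok_def by simp
      next
        case False
        then have "T' (r,c) = T (r,c)" "T' (Suc r,c) = T (Suc r,c)" using same F1 by auto
        then show ?thesis using tab_col_step[OF tab] h by simp
      qed
    qed
  qed
  have c6: "\<forall>r c c'. (r, c) \<in> ?B \<and> (r, c') \<in> ?B \<and> T' (r, c) = T' (r, c') \<and> odd (T' (r, c)) \<longrightarrow> c = c'"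
  proof (intro allI impI)
    fix r c c' assume h: "(r, c) \<in> ?B \<and> (r, c') \<in> ?B \<and> T' (r, c) = T' (r, c') \<and> odd (T' (r, c))"
    show "c = c'"
    proof (rule ccontr)
      assume ne: "c \<noteq> c'"
      show False
      proof (cases "(r,c) = (r1,c1) \<or> (r,c) = (r2,c2)")
        case True
        have imp: "odd (T' (r,c)) \<longrightarrow> (\<forall>x. (r,x) \<in> ?B \<longrightarrow> x \<noteq> c \<longrightarrow> T' (r,x) \<noteq> T' (r,c))"
          using lk[OF True] unfolding locok_def by (elim conjE)
        have o: "odd (T' (r,c))" using h by (elim conjE)
        have cb: "(r,c') \<in> ?B" using h by (elim conjE)
        have "T' (r,c') \<noteq> T' (r,c)" using mp[OF imp o, rule_format, OF cb] ne by simp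
        then show False using h by simp
      next
        case F1: False
        show False
        proof (cases "(r,c') = (r1,c1) \<or> (r,c') = (r2,c2)")
          case True
          have imp: "odd (T' (r,c')) \<longrightarrow> (\<forall>x. (r,x) \<in> ?B \<longrightarrow> x \<noteq> c' \<longrightarrow> T' (r,x) \<noteq> T' (r,c'))"
            using lk[OF True] unfolding locok_def by (elim conjE)
          have o: "odd (T' (r,c'))" using h by metis
          have cb: "(r,c) \<in> ?B" using h by (elim conjE)
          have "T' (r,c) \<noteq> T' (r,c')" using mp[OF imp o, rule_format, OF cb] ne by simp
          then show False using h by simp
        next
          case False
          then have e: "T' (r,c) = T (r,c)" "T' (r,c') = T (r,c')" using same F1 by auto
          have "c = c'" using tab_row_odd[OF tab, of r c c'] h e by metis
          then show False using ne by simp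
        qed
      qed
    qed
  qed
  have c7: "\<forall>r r' c. (r, c) \<in> ?B \<and> (r', c) \<in> ?B \<and> T' (r, c) = T' (r', c) \<and> even (T' (r, c)) \<longrightarrow> r = r'"
  proof (intro allI impI)
    fix r r' c assume h: "(r, c) \<in> ?B \<and> (r', c) \<in> ?B \<and> T' (r, c) = T' (r', c) \<and> even (T' (r, c))"
    show "r = r'"
    proof (rule ccontr)
      assume ne: "r \<noteq> r'"
      show False
      proof (cases "(r,c) = (r1,c1) \<or> (r,c) = (r2,c2)")
        case True
        have imp: "even (T' (r,c)) \<longrightarrow> (\<forall>a. (a,c) \<in> ?B \<longrightarrow> a \<noteq> r \<longrightarrow> T' (a,c) \<noteq> T' (r,c))"
          using lk[OF True] unfolding locok_def by (elim conjE)
        have o: "even (T' (r,c))" using h by (elim conjE)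
        have cb: "(r',c) \<in> ?B" using h by (elim conjE)
        have "T' (r',c) \<noteq> T' (r,c)" using mp[OF imp o, rule_format, OF cb] ne by simp
        then show False using h by simp
      next
        case F1: False
        show False
        proof (cases "(r',c) = (r1,c1) \<or> (r',c) = (r2,c2)")
          case True
          have imp: "even (T' (r',c)) \<longrightarrow> (\<forall>a. (a,c) \<in> ?B \<longrightarrow> a \<noteq> r' \<longrightarrow> T' (a,c) \<noteq> T' (r',c))"
            using lk[OF True] unfolding locok_def by (elim conjE)
          have o: "even (T' (r',c))" using h by metis
          have cb: "(r,c) \<in> ?B" using h by (elim conjE)
          have "T' (r,c) \<noteq> T' (r',c)" using mp[OF imp o, rule_format, OF cb] ne by simp
          then show False using h by simp
        next
          case False
          then have e: "T' (r,c) = T (r,c)" "T' (r',c) = T (r',c)" using same F1 by auto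
          have "r = r'" using tab_col_even[OF tab, of r c r'] h e by metis
          then show False using ne by simp
        qed
      qed
    qed
  qed
  show ?thesis unfolding primed_tableau_def by (intro conjI tab_skew[OF tab] c2 c3 c4 c5 c6 c7)
qed


theorem lemma3p3:
  fixes k i :: nat and lam mu :: "nat list" and T T' :: "nat \<times> nat \<Rightarrow> nat"
    and y p :: "nat \<times> nat"
  assumes "primed_tableau k lam mu T"
    and "1 \<le> i" and "i \<le> k - 1"
    and "e_op lam mu i T = Some T'"
    and "e_box lam mu i T = Some y"
    and "p = p_box T i y"
  shows "((p = y \<and> T y = unp (Suc i) \<and> T' = T(y := unp i))
          \<or> (p \<noteq> y \<and> T y = unp (Suc i) \<and> T p = prm (Suc i)
              \<and> T' = T(y := prm (Suc i), p := unp i)))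
         \<and> primed_tableau k lam mu T'"
proof -
  have tab: "primed_tableau k lam mu T" and i1: "1 \<le> i" using assms by auto
  let ?B = "boxes lam mu"
  obtain r c where y: "y = (r,c)" by (cases y)
  have eb: "e_box lam mu i T = Some (r,c)" using assms(5) y by simp
  have yb: "(r,c) \<in> ?B" and tyu: "T (r,c) = unp (Suc i)" using ebox_basic[OF eb] by auto
  have ty: "T (r,c) = 2*i+2" using tyu by (simp add: unp_eq)
  have T'eq: "T' = (T(y := T y - 1))(p := (T(y := T y - 1)) p - 1)"
    using assms(4,5,6) unfolding e_op_def Let_def by simp
  have rng: "T (r,c) \<le> 2*k" using tab_range[OF tab yb] by simp
  define W where "W = cW T y"
  define N where "N = cN T y"
  have Wv: "W = (if c = 0 then 0 else T (r, c-1))" unfolding W_def cW_def y by simp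
  have Nv: "N = (if r = 0 then 0 else T (r-1, c))" unfolding N_def cN_def y by simp
  have pv: "p = (if W \<le> unp i \<and> N < unp i then y
      else if W = prm (Suc i) then (r, c - 1)
      else if W \<le> unp i \<and> N \<in> {unp i, prm (Suc i)} then rib_end T i (r - 1, c)
      else y)" unfolding assms(6) p_box_def W_def N_def y by simp
  have E_ge: "(r, Suc c) \<in> ?B \<Longrightarrow> 2*i+2 \<le> T (r, Suc c)" using tab_row_step[OF tab yb] ty by force
  have S_ge: "(Suc r, c) \<in> ?B \<Longrightarrow> 2*i+2 \<le> T (Suc r, c)" using tab_col_step[OF tab yb] ty by force
  show ?thesis
  proof (cases "W \<le> unp i \<and> N < unp i")
    case C1: True
    have py: "p = y" using pv C1 by simp
    have T'v: "T' = T(y := unp i)" using T'eq py y ty by (simp add: unp_eq)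
    have lk: "locok k lam mu T' r c"
      unfolding locok_def
    proof (intro conjI impI allI)
      show "1 \<le> T' (r,c)" "T' (r,c) \<le> 2*k" using T'v y i1 rng ty by (auto simp: unp_eq)
    next
      assume "1 \<le> c" "(r, c-1) \<in> ?B"
      then show "T' (r,c-1) \<le> T' (r,c)" using T'v y C1 Wv by (auto simp: unp_eq)
    next
      assume "(r, Suc c) \<in> ?B"
      then show "T' (r,c) \<le> T' (r, Suc c)" using T'v y E_ge by (auto simp: unp_eq)
    next
      assume "1 \<le> r" "(r-1, c) \<in> ?B"
      then show "T' (r-1,c) \<le> T' (r,c)" using T'v y C1 Nv by (auto simp: unp_eq)
    next
      assume "(Suc r, c) \<in> ?B"
      then show "T' (r,c) \<le> T' (Suc r, c)" using T'v y S_ge by (auto simp: unp_eq)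
    next
      fix x assume "odd (T' (r,c))" "(r,x) \<in> ?B" "x \<noteq> c"
      then show "T' (r,x) \<noteq> T' (r,c)" using T'v y by (simp add: unp_eq)
    next
      fix a assume ab: "(a,c) \<in> ?B" and ar: "a \<noteq> r"
      have Ta: "T' (a,c) = T (a,c)" using T'v y ar by simp
      show "T' (a,c) \<noteq> T' (r,c)"
      proof (cases "a < r")
        case True
        have b1: "(r-1,c) \<in> ?B" by (rule tab_rect[OF tab ab yb]) (use True in auto)
        have "T (a,c) \<le> T (r-1,c)" using tab_col_mono[OF tab ab b1] True by simp
        then have "T (a,c) < 2*i" using C1 Nv True by (simp add: unp_eq)
        then show ?thesis using Ta T'v y by (simp add: unp_eq)
      next
        case False
        then have "T (r,c) \<le> T (a,c)" using tab_col_mono[OF tab yb ab] by simp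
        then show ?thesis using Ta T'v y ty by (simp add: unp_eq)
      qed
    qed
    have "primed_tableau k lam mu T'"
      by (rule tab_mod[OF tab yb yb _ lk lk]) (simp add: T'v y)
    then show ?thesis using py T'v tyu y by simp
  next
    case NC1: False
    show ?thesis
    proof (cases "W = prm (Suc i)")
      case C2: True
      have c1: "1 \<le> c" using C2 Wv by (cases "c = 0") (auto simp: prm_Suc)
      have tw: "T (r, c-1) = 2*i+1" using C2 Wv c1 by (simp add: prm_Suc)
      define w where "w = (r, c-1)"
      have pw: "p = w" using pv NC1 C2 unfolding w_def by (simp add: unp_eq prm_Suc)
      have wy: "w \<noteq> y" using y c1 unfolding w_def by simp
      have wb: "(r, c-1) \<in> ?B" using box_of_val[OF tab i1 tw] by simp
      have T'v: "T' = T(y := prm (Suc i), p := unp i)" using T'eq pw wy y ty tw unfolding w_def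
        by (simp add: unp_eq prm_Suc)
      have T'y: "T' (r,c) = 2*i+1" using T'v pw wy y by (simp add: prm_Suc w_def)
      have T'w: "T' (r,c-1) = 2*i" using T'v pw by (simp add: unp_eq w_def)
      have T'o: "\<And>q. q \<noteq> (r,c) \<Longrightarrow> q \<noteq> (r,c-1) \<Longrightarrow> T' q = T q" using T'v pw y unfolding w_def by simp
      have Ny: "1 \<le> r \<Longrightarrow> (r-1,c) \<in> ?B \<Longrightarrow> T (r-1,c) \<le> 2*i+1"
      proof -
        assume r1: "1 \<le> r" and nb: "(r-1,c) \<in> ?B"
        have le: "T (r-1,c) \<le> T (r,c)" using tab_col_mono[OF tab nb yb] by simp
        have "T (r-1,c) \<noteq> T (r,c)"
        proof
          assume "T (r-1,c) = T (r,c)"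
          then have "r - 1 = r" using tab_col_even[OF tab nb yb] ty by simp
          then show False using r1 by simp
        qed
        then show ?thesis using le ty by simp
      qed
      have NW: "1 \<le> r \<Longrightarrow> (r-1,c-1) \<in> ?B \<Longrightarrow> T (r-1,c-1) \<le> 2*i"
      proof -
        assume r1: "1 \<le> r" and nb: "(r-1,c-1) \<in> ?B"
        have le: "T (r-1,c-1) \<le> T (r,c-1)" using tab_col_mono[OF tab nb wb] by simp
        have "T (r-1,c-1) \<noteq> 2*i+1"
        proof
          assume h: "T (r-1,c-1) = 2*i+1"
          have nb2: "(r-1,c) \<in> ?B" by (rule tab_rect[OF tab nb yb]) auto
          have "T (r-1,c-1) \<le> T (r-1,c)" using tab_row_mono[OF tab nb nb2] by simp
          then have "T (r-1,c) = 2*i+1" using Ny[OF r1 nb2] h by simp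
          then have "c - 1 = c" using tab_row_odd[OF tab nb nb2] h by simp
          then show False using c1 by simp
        qed
        then show ?thesis using le tw by simp
      qed
      have lky: "locok k lam mu T' r c"
        unfolding locok_def
      proof (intro conjI impI allI)
        show "1 \<le> T' (r,c)" "T' (r,c) \<le> 2*k" using T'y rng ty by auto
      next
        show "T' (r,c-1) \<le> T' (r,c)" using T'y T'w by simp
      next
        assume "(r, Suc c) \<in> ?B"
        then show "T' (r,c) \<le> T' (r, Suc c)" using T'y T'o[of "(r,Suc c)"] E_ge by simp
      next
        assume "1 \<le> r" "(r-1, c) \<in> ?B"
        then show "T' (r-1,c) \<le> T' (r,c)" using T'y T'o[of "(r-1,c)"] Ny by simp
      next
        assume "(Suc r, c) \<in> ?B"
        then show "T' (r,c) \<le> T' (Suc r, c)" using T'y T'o[of "(Suc r,c)"] S_ge by simp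
      next
        fix x assume xb: "(r,x) \<in> ?B" and xc: "x \<noteq> c"
        show "T' (r,x) \<noteq> T' (r,c)"
        proof (cases "x = c - 1")
          case True then show ?thesis using T'y T'w by simp
        next
          case False
          have "T (r,x) \<noteq> 2*i+1"
          proof
            assume "T (r,x) = 2*i+1"
            then have "x = c - 1" using tab_row_odd[OF tab xb wb] tw by simp
            then show False using False by simp
          qed
          then show ?thesis using T'o[of "(r,x)"] xc False T'y by simp
        qed
      next
        fix a assume "even (T' (r,c))" "(a,c) \<in> ?B" "a \<noteq> r"
        then show "T' (a,c) \<noteq> T' (r,c)" using T'y by simp
      qed
      have lkw: "locok k lam mu T' r (c-1)"
        unfolding locok_def
      proof (intro conjI impI allI)
        show "1 \<le> T' (r,c-1)" "T' (r,c-1) \<le> 2*k" using T'w rng ty i1 by auto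
      next
        assume c2: "1 \<le> c - 1" and bb: "(r, c-1-1) \<in> ?B"
        have ne: "(r,c-1-1) \<noteq> (r,c)" "(r,c-1-1) \<noteq> (r,c-1)" using c2 by auto
        have le: "T (r,c-1-1) \<le> T (r,c-1)" using tab_row_mono[OF tab bb wb] by simp
        have "T (r,c-1-1) \<noteq> 2*i+1"
        proof
          assume "T (r,c-1-1) = 2*i+1"
          then have "c-1-1 = c-1" using tab_row_odd[OF tab bb wb] tw by simp
          then show False using c2 by simp
        qed
        then show "T' (r,c-1-1) \<le> T' (r,c-1)" using T'o[OF ne] T'w le tw by simp
      next
        assume "(r, Suc (c-1)) \<in> ?B"
        show "T' (r,c-1) \<le> T' (r, Suc (c-1))" using T'w T'y c1 by simp
      next
        assume r1: "1 \<le> r" and bb: "(r-1, c-1) \<in> ?B"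
        have ne: "(r-1,c-1) \<noteq> (r,c)" "(r-1,c-1) \<noteq> (r,c-1)" using r1 by auto
        show "T' (r-1,c-1) \<le> T' (r,c-1)" using T'o[OF ne] T'w NW[OF r1 bb] by simp
      next
        assume bb: "(Suc r, c-1) \<in> ?B"
        have ne: "(Suc r,c-1) \<noteq> (r,c)" "(Suc r,c-1) \<noteq> (r,c-1)" by auto
        have "T (r,c-1) \<le> T (Suc r, c-1)" using tab_col_step[OF tab wb bb] .
        then show "T' (r,c-1) \<le> T' (Suc r, c-1)" using T'o[OF ne] T'w tw by simp
      next
        fix x assume "odd (T' (r,c-1))" "(r,x) \<in> ?B" "x \<noteq> c-1"
        then show "T' (r,x) \<noteq> T' (r,c-1)" using T'w by simp
      next
        fix a assume ab: "(a,c-1) \<in> ?B" and ar: "a \<noteq> r"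
        have ne: "(a,c-1) \<noteq> (r,c)" "(a,c-1) \<noteq> (r,c-1)" using c1 ar by auto
        show "T' (a,c-1) \<noteq> T' (r,c-1)"
        proof (cases "a < r")
          case True
          have r1: "1 \<le> r" using True by simp
          have b1: "(r-1,c-1) \<in> ?B" by (rule tab_rect[OF tab ab wb]) (use True in auto)
          have le: "T (a,c-1) \<le> T (r-1,c-1)" using tab_col_mono[OF tab ab b1] True by simp
          have "T (a,c-1) \<noteq> 2*i"
          proof
            assume "T (a,c-1) = 2*i"
            then have "T (r-1,c-1) = 2*i" using le NW[OF r1 b1] by simp
            then show False using case2_NW[OF tab i1 eb c1 r1 tw] by simp
          qed
          then show ?thesis using T'o[OF ne] T'w by simp
        next
          case False
          then have "T (r,c-1) \<le> T (a,c-1)" using tab_col_mono[OF tab wb ab] by simp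
          then show ?thesis using T'o[OF ne] T'w tw by simp
        qed
      qed
      have "primed_tableau k lam mu T'"
        by (rule tab_mod[OF tab yb wb _ lky lkw]) (use T'o in simp)
      then show ?thesis using pw wy T'v tyu tw y unfolding w_def by (simp add: prm_Suc)
    next
      case NC2: False
      show ?thesis
      proof (cases "W \<le> unp i \<and> N \<in> {unp i, prm (Suc i)}")
        case C3: True
        have r1: "1 \<le> r" using C3 Nv i1 by (cases "r = 0") (auto simp: unp_eq prm_Suc)
        define s where "s = (r - 1, c)"
        have sS: "T s \<in> {unp i, prm (Suc i)}" using C3 Nv r1 unfolding s_def by simp
        have pr: "p = rib_end T i s" using pv NC1 NC2 C3 unfolding s_def by simp
        have rp: "rib_reach T i s p" and ep: "endc T i p" using rib_end_prop[OF tab i1 sS] pr by auto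
        obtain a b where pab: "p = (a,b)" by (cases p)
        have ar: "a \<le> r - 1" using reach_row[OF rp] pab unfolding s_def by simp
        have tpS: "T (a,b) \<in> {unp i, prm (Suc i)}" using ribS[OF tab sS rp] pab by simp
        have "T (a,b) \<noteq> 2*i"
        proof
          assume "T (a,b) = 2*i"
          then have "T (rib_end T i (r - 1, c)) = 2*i" using pr pab unfolding s_def by simp
          then show False using case3_end[OF tab i1 eb r1] sS unfolding s_def by simp
        qed
        then have tp: "T (a,b) = 2*i+1" using tpS by (auto simp: unp_eq prm_Suc)
        have pb: "(a,b) \<in> ?B" using box_of_val[OF tab i1 tp] by simp
        have py: "(a,b) \<noteq> (r,c)" using ar r1 by auto
        have T'v: "T' = T(y := prm (Suc i), p := unp i)" using T'eq py pab y ty tp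
          by (simp add: unp_eq prm_Suc)
        have T'y: "T' (r,c) = 2*i+1" using T'v pab py y by (auto simp: prm_Suc)
        have T'p: "T' (a,b) = 2*i" using T'v pab by (simp add: unp_eq)
        have T'o: "\<And>q. q \<noteq> (r,c) \<Longrightarrow> q \<noteq> (a,b) \<Longrightarrow> T' q = T q" using T'v pab y by simp
        have eN: "\<not> (0 < a \<and> T (a - 1, b) \<in> {unp i, prm (Suc i)})" and eE: "T (a, Suc b) \<notin> {unp i, prm (Suc i)}"
          using ep pab unfolding endc_def by auto
        have Wle: "1 \<le> c \<Longrightarrow> T (r, c-1) \<le> 2*i" using C3 Wv by (simp add: unp_eq)
        have lky: "locok k lam mu T' r c"
          unfolding locok_def
        proof (intro conjI impI allI)
          show "1 \<le> T' (r,c)" "T' (r,c) \<le> 2*k" using T'y rng ty by auto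
        next
          assume c1: "1 \<le> c" and bb: "(r, c-1) \<in> ?B"
          have ne: "(r,c-1) \<noteq> (r,c)" "(r,c-1) \<noteq> (a,b)" using c1 ar r1 by auto
          show "T' (r,c-1) \<le> T' (r,c)" using T'o[OF ne] T'y Wle[OF c1] by simp
        next
          assume bb: "(r, Suc c) \<in> ?B"
          have ne: "(r,Suc c) \<noteq> (r,c)" "(r,Suc c) \<noteq> (a,b)" using ar r1 by auto
          show "T' (r,c) \<le> T' (r, Suc c)" using T'o[OF ne] T'y E_ge[OF bb] by simp
        next
          assume "1 \<le> r" and bb: "(r-1, c) \<in> ?B"
          show "T' (r-1,c) \<le> T' (r,c)"
          proof (cases "(r-1,c) = (a,b)")
            case True then show ?thesis using T'p T'y by simp
          next
            case False
            have "T (r-1,c) \<le> 2*i+1" using sS unfolding s_def by (auto simp: unp_eq prm_Suc)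
            then show ?thesis using T'o[of "(r-1,c)"] False r1 T'y by simp
          qed
        next
          assume bb: "(Suc r, c) \<in> ?B"
          have ne: "(Suc r,c) \<noteq> (r,c)" "(Suc r,c) \<noteq> (a,b)" using ar r1 by auto
          show "T' (r,c) \<le> T' (Suc r, c)" using T'o[OF ne] T'y S_ge[OF bb] by simp
        next
          fix x assume xb: "(r,x) \<in> ?B" and xc: "x \<noteq> c"
          have ne: "(r,x) \<noteq> (r,c)" "(r,x) \<noteq> (a,b)" using xc ar r1 by auto
          show "T' (r,x) \<noteq> T' (r,c)"
          proof (cases "x < c")
            case True
            have c1: "1 \<le> c" using True by simp
            have b1: "(r,c-1) \<in> ?B" by (rule tab_rect[OF tab xb yb]) (use True in auto)
            have "T (r,x) \<le> T (r,c-1)" using tab_row_mono[OF tab xb b1] True by simp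
            then show ?thesis using T'o[OF ne] T'y Wle[OF c1] by simp
          next
            case False
            then have "T (r,c) \<le> T (r,x)" using tab_row_mono[OF tab yb xb] by simp
            then show ?thesis using T'o[OF ne] T'y ty by simp
          qed
        next
          fix a0 assume "even (T' (r,c))" "(a0,c) \<in> ?B" "a0 \<noteq> r"
          then show "T' (a0,c) \<noteq> T' (r,c)" using T'y by simp
        qed
        have lkp: "locok k lam mu T' a b"
          unfolding locok_def
        proof (intro conjI impI allI)
          show "1 \<le> T' (a,b)" "T' (a,b) \<le> 2*k" using T'p rng ty i1 by auto
        next
          assume b1: "1 \<le> b" and bb: "(a, b-1) \<in> ?B"
          have ne: "(a,b-1) \<noteq> (r,c)" "(a,b-1) \<noteq> (a,b)" using b1 ar r1 by auto
          have le: "T (a,b-1) \<le> T (a,b)" using tab_row_mono[OF tab bb pb] by simp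
          have "T (a,b-1) \<noteq> 2*i+1"
          proof
            assume "T (a,b-1) = 2*i+1"
            then have "b-1 = b" using tab_row_odd[OF tab bb pb] tp by simp
            then show False using b1 by simp
          qed
          then show "T' (a,b-1) \<le> T' (a,b)" using T'o[OF ne] T'p le tp by simp
        next
          assume bb: "(a, Suc b) \<in> ?B"
          have ne: "(a,Suc b) \<noteq> (r,c)" "(a,Suc b) \<noteq> (a,b)" using ar r1 by auto
          have "T (a,b) \<le> T (a, Suc b)" using tab_row_step[OF tab pb bb] .
          then show "T' (a,b) \<le> T' (a, Suc b)" using T'o[OF ne] T'p tp by simp
        next
          assume a1: "1 \<le> a" and bb: "(a-1, b) \<in> ?B"
          have ne: "(a-1,b) \<noteq> (r,c)" "(a-1,b) \<noteq> (a,b)" using a1 ar r1 by auto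
          have le: "T (a-1,b) \<le> T (a,b)" using tab_col_mono[OF tab bb pb] by simp
          have "T (a-1,b) \<notin> {unp i, prm (Suc i)}" using eN a1 by simp
          then have "T (a-1,b) < 2*i" using le tp by (auto simp: unp_eq prm_Suc)
          then show "T' (a-1,b) \<le> T' (a,b)" using T'o[OF ne] T'p by simp
        next
          assume bb: "(Suc a, b) \<in> ?B"
          show "T' (a,b) \<le> T' (Suc a, b)"
          proof (cases "(Suc a, b) = (r,c)")
            case True then show ?thesis using T'y T'p by simp
          next
            case False
            have ne: "(Suc a,b) \<noteq> (a,b)" by simp
            have "T (a,b) \<le> T (Suc a, b)" using tab_col_step[OF tab pb bb] .
            then show ?thesis using T'o[OF False ne] T'p tp by simp
          qed
        next
          fix x assume "odd (T' (a,b))" "(a,x) \<in> ?B" "x \<noteq> b"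
          then show "T' (a,x) \<noteq> T' (a,b)" using T'p by simp
        next
          fix a0 assume ab: "(a0,b) \<in> ?B" and an: "a0 \<noteq> a"
          show "T' (a0,b) \<noteq> T' (a,b)"
          proof (cases "(a0,b) = (r,c)")
            case True then show ?thesis using T'y T'p by simp
          next
            case False
            have ne: "(a0,b) \<noteq> (a,b)" using an by simp
            show ?thesis
            proof (cases "a0 < a")
              case True
              have a1: "1 \<le> a" using True by simp
              have b1: "(a-1,b) \<in> ?B" by (rule tab_rect[OF tab ab pb]) (use True in auto)
              have le: "T (a0,b) \<le> T (a-1,b)" using tab_col_mono[OF tab ab b1] True by simp
              have le2: "T (a-1,b) \<le> T (a,b)" using tab_col_mono[OF tab b1 pb] by simp
              have "T (a-1,b) \<notin> {unp i, prm (Suc i)}" using eN a1 by simp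
              then have "T (a-1,b) < 2*i" using le2 tp by (auto simp: unp_eq prm_Suc)
              then show ?thesis using T'o[OF False ne] T'p le by simp
            next
              case F2: False
              then have "T (a,b) \<le> T (a0,b)" using tab_col_mono[OF tab pb ab] by simp
              then show ?thesis using T'o[OF False ne] T'p tp by simp
            qed
          qed
        qed
        have "primed_tableau k lam mu T'"
          by (rule tab_mod[OF tab yb pb _ lky lkp]) (use T'o in simp)
        then show ?thesis using pab py T'v tyu tp y by (simp add: prm_Suc)
      next
        case NC3: False
        show ?thesis
        proof (cases "W \<le> unp i")
          case True
          then have "\<not> N < unp i" "N \<notin> {unp i, prm (Suc i)}" using NC1 NC3 by auto
          then have Nge: "2*i+2 \<le> N" by (auto simp: unp_eq prm_Suc)
          then have r1: "1 \<le> r" and TN: "T (r-1,c) = N" using Nv by (auto split: if_splits)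
          have nb: "(r-1,c) \<in> ?B" using tab_nz[OF tab] TN Nge by force
          have "T (r-1,c) \<le> T (r,c)" using tab_col_mono[OF tab nb yb] by simp
          then have "T (r-1,c) = T (r,c)" using TN Nge ty by simp
          then have "r - 1 = r" using tab_col_even[OF tab nb yb] ty by simp
          then show ?thesis using r1 by simp
        next
          case False
          then have Wge: "2*i+2 \<le> W" using NC2 by (auto simp: unp_eq prm_Suc)
          then have c1: "1 \<le> c" and TW: "T (r,c-1) = W" using Wv by (auto split: if_splits)
          have wb: "(r,c-1) \<in> ?B" using tab_nz[OF tab] TW Wge by force
          have "T (r,c-1) \<le> T (r,c)" using tab_row_mono[OF tab wb yb] by simp
          then have "T (r,c-1) = unp (Suc i)" using TW Wge ty by (simp add: unp_eq)
          then show ?thesis using ebox_left[OF eb c1 wb] by simp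
        qed
      qed
    qed
  qed
qed


end
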